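(* The $\lambda es$-calculus enjoys PSN: every $\lambda$-term that is $\beta$-strongly normalizing is strongly normalizing for $\to_{\lambda es}$.
   Context: Terms are generated by $t,u::= x\mid \lambda x.t\mid t\,u\mid t[x/u]$; $\lambda x.t$ and $t[x/u]$ bind $x$ in $t$ (not in $u$), and terms are considered modulo $\alpha$-conversion. $\lambda$-terms are those without explicit substitutions $[x/u]$. $\mathrm{fv}(t)$ is the set of free variables and $t\{x/u\}$ capture-avoiding meta-level substitution. The $\lambda es$-calculus has the following rules closed under all contexts: $({\tt B})$ $(\lambda x.t)u\to t[x/u]$; $({\tt d}')$ $x[x/u]\to u$; $({\tt w})$ $t[x/u]\to t$ if $x\notin\mathrm{fv}(t)$; $(@_r)$ $(t\,v)[x/u]\to t\,(v[x/u])$ if $x\notin\mathrm{fv}(t)$, $x\in\mathrm{fv}(v)$; $(@_l)$ $(t\,v)[x/u]\to t[x/u]\,v$ if $x\in\mathrm{fv}(t)$, $x\notin\mathrm{fv}(v)$; $(@)$ $(t\,v)[x/u]\to t[x/u]\,v[x/u]$ if $x\in\mathrm{fv}(t)$ and $x\in\mathrm{fv}(v)$; $(\lambda)$ $(\lambda y.t)[x/u]\to\lambda y.(t[x/u])$ (with $y\notin\mathrm{fv}(u)$ by $\alpha$); $({\tt comp}_1)$ $t[x/u][y/v]\to t[x/u[y/v]]$ if $y\notin\mathrm{fv}(t)$, $y\in\mathrm{fv}(u)$; $({\tt comp}_2)$ $t[x/u][y/v]\to t[y/v][x/u[y/v]]$ if $y\in\mathrm{fv}(t)$, $y\in\mathrm{fv}(u)$;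 all modulo the equivalence $\equiv_{\tt CS}$, the smallest equivalence closed under contexts containing $t[x/u][y/v]\sim t[y/v][x/u]$ if $y\notin\mathrm{fv}(u)$, $x\notin\mathrm{fv}(v)$, $x\neq y$. $\beta$-reduction is the contextual closure of $(\lambda x.t)u\to t\{x/u\}$. *)

theory Defs
  imports Main
begin

text \<open>Terms modulo alpha-conversion, represented with de Bruijn indices.
  In Sub t u (the explicit substitution t[x/u]) the bound variable x is index 0 of t;
  u lies outside the binder.\<close>

datatype trm = Var nat | Lam trm | App trm trm | Sub trm trm

fun fv :: "trm \<Rightarrow> nat set" where
  "fv (Var i) = {i}"
| "fv (Lam t) = {i. Suc i \<in> fv t}"
| "fv (App t u) = fv t \<union> fv u"
| "fv (Sub t u) = {i. Suc i \<in> fv t} \<union> fv u"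

fun is_lambda :: "trm \<Rightarrow> bool" where
  "is_lambda (Var i) = True"
| "is_lambda (Lam t) = is_lambda t"
| "is_lambda (App t u) = (is_lambda t \<and> is_lambda u)"
| "is_lambda (Sub t u) = False"

fun lift :: "nat \<Rightarrow> trm \<Rightarrow> trm" where
  "lift k (Var i) = (if i < k then Var i else Var (Suc i))"
| "lift k (Lam t) = Lam (lift (Suc k) t)"
| "lift k (App t u) = App (lift k t) (lift k u)"
| "lift k (Sub t u) = Sub (lift (Suc k) t) (lift k u)"

text \<open>decr k t: remove the (unused) free index k, decrementing indices > k.\<close>
fun decr :: "nat \<Rightarrow> trm \<Rightarrow> trm" where
  "decr k (Var i) = (if i \<le> k then Var i else Var (i - 1))"
| "decr k (Lam t) = Lam (decr (Suc k) t)"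
| "decr k (App t u) = App (decr k t) (decr k u)"
| "decr k (Sub t u) = Sub (decr (Suc k) t) (decr k u)"

fun swap :: "nat \<Rightarrow> trm \<Rightarrow> trm" where
  "swap k (Var i) = (if i = k then Var (Suc k) else if i = Suc k then Var k else Var i)"
| "swap k (Lam t) = Lam (swap (Suc k) t)"
| "swap k (App t u) = App (swap k t) (swap k u)"
| "swap k (Sub t u) = Sub (swap (Suc k) t) (swap k u)"

fun subst :: "trm \<Rightarrow> nat \<Rightarrow> trm \<Rightarrow> trm" where
  "subst (Var i) k s = (if k < i then Var (i - 1) else if i = k then s else Var i)"
| "subst (Lam t) k s = Lam (subst t (Suc k) (lift 0 s))"
| "subst (App t u) k s = App (subst t k s) (subst u k s)"
| "subst (Sub t u) k s = Sub (subst t (Suc k) (lift 0 s)) (subst u k s)"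

inductive ctx :: "(trm \<Rightarrow> trm \<Rightarrow> bool) \<Rightarrow> trm \<Rightarrow> trm \<Rightarrow> bool" for R where
  root: "R t t' \<Longrightarrow> ctx R t t'"
| lam: "ctx R t t' \<Longrightarrow> ctx R (Lam t) (Lam t')"
| appl: "ctx R t t' \<Longrightarrow> ctx R (App t u) (App t' u)"
| appr: "ctx R u u' \<Longrightarrow> ctx R (App t u) (App t u')"
| subl: "ctx R t t' \<Longrightarrow> ctx R (Sub t u) (Sub t' u)"
| subr: "ctx R u u' \<Longrightarrow> ctx R (Sub t u) (Sub t u')"

inductive beta_rule :: "trm \<Rightarrow> trm \<Rightarrow> bool" where
  "beta_rule (App (Lam t) u) (subst t 0 u)"

definition beta :: "trm \<Rightarrow> trm \<Rightarrow> bool" where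
  "beta = ctx beta_rule"

inductive es_rule :: "trm \<Rightarrow> trm \<Rightarrow> bool" where
  B:     "es_rule (App (Lam t) u) (Sub t u)"
| d':    "es_rule (Sub (Var 0) u) u"
| w:     "0 \<notin> fv t \<Longrightarrow> es_rule (Sub t u) (decr 0 t)"
| app_r: "0 \<notin> fv t \<Longrightarrow> 0 \<in> fv v \<Longrightarrow> es_rule (Sub (App t v) u) (App (decr 0 t) (Sub v u))"
| app_l: "0 \<in> fv t \<Longrightarrow> 0 \<notin> fv v \<Longrightarrow> es_rule (Sub (App t v) u) (App (Sub t u) (decr 0 v))"
| app:   "0 \<in> fv t \<Longrightarrow> 0 \<in> fv v \<Longrightarrow> es_rule (Sub (App t v) u) (App (Sub t u) (Sub v u))"
| lam:   "es_rule (Sub (Lam t) u) (Lam (Sub (swap 0 t) (lift 0 u)))"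
| comp1: "1 \<notin> fv t \<Longrightarrow> 0 \<in> fv u \<Longrightarrow> es_rule (Sub (Sub t u) v) (Sub (decr 1 t) (Sub u v))"
| comp2: "1 \<in> fv t \<Longrightarrow> 0 \<in> fv u \<Longrightarrow>
            es_rule (Sub (Sub t u) v) (Sub (Sub (swap 0 t) (lift 0 v)) (Sub u v))"

text \<open>The CS axiom t[x/u][y/v] ~ t[y/v][x/u] (y not free in u; x not free in v is automatic).\<close>
inductive cs_rule :: "trm \<Rightarrow> trm \<Rightarrow> bool" where
  "0 \<notin> fv u \<Longrightarrow> cs_rule (Sub (Sub t u) v) (Sub (Sub (swap 0 t) (lift 0 v)) (decr 0 u))"

definition cs_eq :: "trm \<Rightarrow> trm \<Rightarrow> bool" where
  "cs_eq = equivclp (ctx cs_rule)"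

definition es_red :: "trm \<Rightarrow> trm \<Rightarrow> bool" where
  "es_red t t' \<longleftrightarrow> (\<exists>s s'. cs_eq t s \<and> ctx es_rule s s' \<and> cs_eq s' t')"

definition SN :: "(trm \<Rightarrow> trm \<Rightarrow> bool) \<Rightarrow> trm \<Rightarrow> bool" where
  "SN R t \<longleftrightarrow> Wellfounded.accp (conversep R) t"

end

theory Submission
  imports Defs "HOL-Library.Multiset"
begin

fun NN :: "trm \<Rightarrow> nat \<Rightarrow> nat" where
  "NN (Var i) z = (if i = z then 1 else 0)"
| "NN (Lam t) z = NN t (Suc z)"
| "NN (App t u) z = NN t z + NN u z"
| "NN (Sub t u) z = NN t (Suc z) + max 1 (NN t 0) * NN u z"

fun lp :: "trm \<Rightarrow> nat" where
  "lp (Var i) = 0"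
| "lp (Lam t) = Suc (lp t)"
| "lp (App t u) = Suc (lp t)"
| "lp (Sub t u) = lp t"

fun LL :: "trm \<Rightarrow> nat \<Rightarrow> nat" where
  "LL (Var i) z = 0"
| "LL (Lam t) z = LL t (Suc z) + NN t (Suc z)"
| "LL (App t u) z = LL t z + LL u z + NN t z + NN u z"
| "LL (Sub t u) z = LL t (Suc z) + (if NN t 0 = 0 then Suc (lp t) else LL t 0 + NN t 0) * NN u z
     + max 1 (NN t 0) * LL u z"

definition JJ :: "trm \<Rightarrow> nat" where
  "JJ t = (if NN t 0 = 0 then Suc (lp t) else LL t 0 + NN t 0)"

definition mm :: "trm \<Rightarrow> nat" where
  "mm t = max 1 (NN t 0)"

lemma LL_Sub: "LL (Sub t u) z = LL t (Suc z) + JJ t * NN u z + mm t * LL u z"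
  by (simp add: JJ_def mm_def)
lemma NN_Sub: "NN (Sub t u) z = NN t (Suc z) + mm t * NN u z"
  by (simp add: mm_def)
declare LL.simps(4)[simp del] NN.simps(4)[simp del]
declare LL_Sub[simp] NN_Sub[simp]

fun DD :: "trm \<Rightarrow> nat" where
  "DD (Var i) = 0"
| "DD (Lam t) = DD t"
| "DD (App t u) = DD t + DD u"
| "DD (Sub t u) = DD t + JJ t + mm t * DD u"

lemma NN_fv: "NN t z = 0 \<longleftrightarrow> z \<notin> fv t"
  by (induction t arbitrary: z) (auto simp: mm_def)

definition liftf :: "nat \<Rightarrow> nat \<Rightarrow> nat" where
  "liftf k i = (if i < k then i else Suc i)"
definition swapf :: "nat \<Rightarrow> nat \<Rightarrow> nat" where
  "swapf k i = (if i = k then Suc k else if i = Suc k then k else i)"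

lemma NN_lift: "NN (lift k t) z = (if z < k then NN t z else if z = k then 0 else NN t (z - 1))"
  by (induction t arbitrary: k z) (auto simp: mm_def)
lemma lp_lift[simp]: "lp (lift k t) = lp t"
  by (induction t arbitrary: k) auto
lemma LL_lift: "LL (lift k t) z = (if z < k then LL t z else if z = k then 0 else LL t (z - 1))"
  by (induction t arbitrary: k z) (auto simp: mm_def JJ_def NN_lift)
lemma DD_lift[simp]: "DD (lift k t) = DD t"
  by (induction t arbitrary: k) (auto simp: mm_def JJ_def NN_lift LL_lift)

lemma NN_swap: "NN (swap k t) z = NN t (swapf k z)"
  by (induction t arbitrary: k z) (auto simp: mm_def swapf_def)
lemma lp_swap[simp]: "lp (swap k t) = lp t"
  by (induction t arbitrary: k) auto
lemma LL_swap: "LL (swap k t) z = LL t (swapf k z)"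
  by (induction t arbitrary: k z) (auto simp: mm_def JJ_def NN_swap swapf_def)
lemma DD_swap[simp]: "DD (swap k t) = DD t"
  by (induction t arbitrary: k) (auto simp: mm_def JJ_def NN_swap LL_swap swapf_def)

lemma NN_decr: "k \<notin> fv t \<Longrightarrow> NN (decr k t) z = NN t (liftf k z)"
  by (induction t arbitrary: k z) (auto simp: mm_def liftf_def)
lemma lp_decr[simp]: "lp (decr k t) = lp t"
  by (induction t arbitrary: k) auto
lemma LL_decr: "k \<notin> fv t \<Longrightarrow> LL (decr k t) z = LL t (liftf k z)"
  by (induction t arbitrary: k z) (auto simp: mm_def JJ_def NN_decr liftf_def)
lemma DD_decr[simp]: "k \<notin> fv t \<Longrightarrow> DD (decr k t) = DD t"
  by (induction t arbitrary: k) (auto simp: mm_def JJ_def NN_decr LL_decr liftf_def)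

inductive prop_rule :: "trm \<Rightarrow> trm \<Rightarrow> bool" where
  app_r: "0 \<notin> fv t \<Longrightarrow> 0 \<in> fv v \<Longrightarrow> prop_rule (Sub (App t v) u) (App (decr 0 t) (Sub v u))"
| app_l: "0 \<in> fv t \<Longrightarrow> 0 \<notin> fv v \<Longrightarrow> prop_rule (Sub (App t v) u) (App (Sub t u) (decr 0 v))"
| app:   "0 \<in> fv t \<Longrightarrow> 0 \<in> fv v \<Longrightarrow> prop_rule (Sub (App t v) u) (App (Sub t u) (Sub v u))"
| lam:   "prop_rule (Sub (Lam t) u) (Lam (Sub (swap 0 t) (lift 0 u)))"
| comp1: "1 \<notin> fv t \<Longrightarrow> 0 \<in> fv u \<Longrightarrow> prop_rule (Sub (Sub t u) v) (Sub (decr 1 t) (Sub u v))"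
| comp2: "1 \<in> fv t \<Longrightarrow> 0 \<in> fv u \<Longrightarrow>
            prop_rule (Sub (Sub t u) v) (Sub (Sub (swap 0 t) (lift 0 v)) (Sub u v))"

lemma liftf0[simp]: "liftf 0 z = Suc z" by (simp add: liftf_def)
lemma liftf1[simp]: "liftf (Suc 0) 0 = 0" "liftf (Suc 0) (Suc z) = Suc (Suc z)" by (auto simp: liftf_def)
lemma swapf0[simp]: "swapf 0 0 = Suc 0" "swapf 0 (Suc 0) = 0" "swapf 0 (Suc (Suc z)) = Suc (Suc z)"
  by (auto simp: swapf_def)

lemma NNpos: "z \<in> fv t \<Longrightarrow> NN t z \<noteq> 0" using NN_fv by blast
lemma NNzero: "z \<notin> fv t \<Longrightarrow> NN t z = 0" using NN_fv by blast
lemma maxS: "max (Suc 0) a = (if a = 0 then 1 else a)" by simp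
lemma NNgt: "z \<in> fv t \<Longrightarrow> 0 < NN t z" using NNpos by blast
lemma LLzero: "z \<notin> fv t \<Longrightarrow> LL t z = 0"
  by (induction t arbitrary: z) (auto simp: NNzero)
lemma maxpos: "z \<in> fv t \<Longrightarrow> max (Suc 0) (NN t z) = NN t z"
  using NNpos[of z t] by simp
lemma maxzero: "z \<notin> fv t \<Longrightarrow> max (Suc 0) (NN t z) = 1"
  using NNzero[of z t] by simp

lemma prop_measure:
  assumes "prop_rule s s'"
  shows "(\<forall>z. NN s' z = NN s z) \<and> (\<forall>z. LL s' z = LL s z) \<and> lp s' = lp s \<and> DD s' < DD s"
  using assms
proof cases
  case (app_r t v u)
  then show ?thesis
    by (auto simp: NN_decr LL_decr JJ_def mm_def NNzero NNpos NNgt LLzero maxS algebra_simps)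
next
  case (app_l t v u)
  then show ?thesis
    by (auto simp: NN_decr LL_decr JJ_def mm_def NNzero NNpos NNgt LLzero maxS algebra_simps)
next
  case (app t v u)
  then show ?thesis
    by (auto simp: JJ_def mm_def NNzero NNpos NNgt LLzero maxS algebra_simps)
next
  case (lam t u)
  then show ?thesis
    by (auto simp: NN_lift LL_lift NN_swap LL_swap JJ_def mm_def LLzero algebra_simps)
next
  case (comp1 t u v)
  then show ?thesis
    by (auto simp: NN_decr LL_decr JJ_def mm_def NNzero NNpos NNgt LLzero maxS algebra_simps)
next
  case (comp2 t u v)
  then show ?thesis
    by (auto simp: NN_lift LL_lift NN_swap LL_swap JJ_def mm_def NNzero NNpos NNgt LLzero maxS algebra_simps)
qed

lemma cs_measure:
  assumes "cs_rule s s'"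
  shows "(\<forall>z. NN s' z = NN s z) \<and> (\<forall>z. LL s' z = LL s z) \<and> lp s' = lp s \<and> DD s' = DD s"
  using assms
proof cases
  case (1 u t v)
  then show ?thesis
    by (auto simp: NN_lift LL_lift NN_swap LL_swap NN_decr LL_decr JJ_def mm_def NNzero NNpos NNgt LLzero maxS algebra_simps)
qed

lemma ctx_prop_measure:
  assumes "ctx prop_rule s s'"
  shows "(\<forall>z. NN s' z = NN s z) \<and> (\<forall>z. LL s' z = LL s z) \<and> lp s' = lp s \<and> DD s' < DD s"
  using assms
proof induction
  case (root t t')
  then show ?case using prop_measure by blast
qed (auto simp: JJ_def mm_def)

lemma ctx_cs_measure:
  assumes "ctx cs_rule s s'"
  shows "(\<forall>z. NN s' z = NN s z) \<and> (\<forall>z. LL s' z = LL s z) \<and> lp s' = lp s \<and> DD s' = DD s"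
  using assms
proof induction
  case (root t t')
  then show ?case using cs_measure by blast
qed (auto simp: JJ_def mm_def)

lemma swap_swap[simp]: "swap k (swap k t) = t"
  by (induction t arbitrary: k) auto
lemma decr_lift[simp]: "decr k (lift k t) = t"
  by (induction t arbitrary: k) auto
lemma lift_decr: "k \<notin> fv t \<Longrightarrow> lift k (decr k t) = t"
  by (induction t arbitrary: k) auto
lemma fv_lift: "i \<in> fv (lift k t) \<longleftrightarrow> (i < k \<and> i \<in> fv t) \<or> (k < i \<and> i - 1 \<in> fv t)"
proof (induction t arbitrary: k i)
  case (Lam t)
  show ?case by (auto simp: Lam)
next
  case (Sub t u)
  show ?case by (auto simp: Sub)
qed auto

lemma cs_sym: "cs_rule s s' \<Longrightarrow> cs_rule s' s"
proof (induction rule: cs_rule.induct)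
  case (1 u t v)
  have "0 \<notin> fv (lift 0 v)" by (simp add: fv_lift)
  then have "cs_rule (Sub (Sub (swap 0 t) (lift 0 v)) (decr 0 u))
     (Sub (Sub (swap 0 (swap 0 t)) (lift 0 (decr 0 u))) (decr 0 (lift 0 v)))"
    by (rule cs_rule.intros)
  then show ?case using 1 by (simp add: lift_decr)
qed

lemma ctx_sym: assumes "\<And>a b. R a b \<Longrightarrow> R b a" "ctx R s s'" shows "ctx R s' s"
  using assms(2) by induction (blast intro: ctx.intros assms(1))+

lemma symclp_cs: "symclp (ctx cs_rule) y z \<Longrightarrow> ctx cs_rule y z"
  unfolding symclp_def using ctx_sym[of cs_rule, OF cs_sym] by blast

lemma cs_eq_rtrancl: "cs_eq s s' \<Longrightarrow> (ctx cs_rule)\<^sup>*\<^sup>* s s'"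
  unfolding cs_eq_def equivclp_def
  by (induction rule: rtranclp_induct) (auto dest: symclp_cs intro: rtranclp.rtrancl_into_rtrancl)

datatype ty = Atom | Arr "ty multiset" ty

type_synonym ctxt = "nat \<Rightarrow> ty multiset"

definition cadd :: "ctxt \<Rightarrow> ctxt \<Rightarrow> ctxt" where "cadd G D = (\<lambda>i. G i + D i)"
definition cle :: "ctxt \<Rightarrow> ctxt \<Rightarrow> bool" where "cle G D = (\<forall>i. G i \<subseteq># D i)"

inductive tj :: "ctxt \<Rightarrow> trm \<Rightarrow> ty \<Rightarrow> nat \<Rightarrow> bool"
  and mtj :: "ctxt \<Rightarrow> trm \<Rightarrow> ty multiset \<Rightarrow> nat \<Rightarrow> bool" where
  tVar: "\<tau> \<in># G i \<Longrightarrow> tj G (Var i) \<tau> 1"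
| tLam: "tj (case_nat M G) t \<tau> n \<Longrightarrow> tj G (Lam t) (Arr M \<tau>) (Suc n)"
| tApp: "tj G1 t (Arr M \<tau>) n \<Longrightarrow> M \<noteq> {#} \<Longrightarrow> mtj G2 u M m \<Longrightarrow> cle (cadd G1 G2) G
          \<Longrightarrow> tj G (App t u) \<tau> (Suc (n + m))"
| tSub: "tj (case_nat M G1) t \<tau> n \<Longrightarrow> M \<noteq> {#} \<Longrightarrow> mtj G2 u M m \<Longrightarrow> cle (cadd G1 G2) G
          \<Longrightarrow> tj G (Sub t u) \<tau> (n + m)"
| mEmp: "mtj G u {#} 0"
| mAdd: "tj G1 u \<sigma> n \<Longrightarrow> mtj G2 u M m \<Longrightarrow> cle (cadd G1 G2) G \<Longrightarrow> mtj G u (add_mset \<sigma> M) (n + m)"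

lemma cle_refl[simp]: "cle G G" by (simp add: cle_def)
lemma cle_trans: "cle A B \<Longrightarrow> cle B C \<Longrightarrow> cle A C"
  unfolding cle_def using subset_mset.order_trans by blast

definition restr :: "nat set \<Rightarrow> ctxt \<Rightarrow> ctxt" where
  "restr S G = (\<lambda>i. if i \<in> S then G i else {#})"

lemma tj_fv_mono:
  "tj G t \<tau> n \<Longrightarrow> (\<forall>i\<in>fv t. G i \<subseteq># G' i) \<Longrightarrow> tj G' t \<tau> n"
  "mtj G t M n \<Longrightarrow> (\<forall>i\<in>fv t. G i \<subseteq># G' i) \<Longrightarrow> mtj G' t M n"
proof (induction arbitrary: G' and G' rule: tj_mtj.inducts)
  case (tVar \<tau> G i)
  then have "\<tau> \<in># G' i" by (auto intro: mset_subset_eqD)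
  then show ?case by (rule tj_mtj.tVar)
next
  case (tLam M G t \<tau> n)
  have "\<forall>i\<in>fv t. case_nat M G i \<subseteq># case_nat M G' i"
    using tLam.prems by (auto split: nat.split)
  then show ?case using tLam.IH by (blast intro: tj_mtj.tLam)
next
  case (tApp G1 t M \<tau> n G2 u m G)
  let ?S = "fv (App t u)"
  have 1: "tj (restr ?S G1) t (Arr M \<tau>) n" using tApp.IH(1) by (auto simp: restr_def)
  have 2: "mtj (restr ?S G2) u M m" using tApp.IH(2) by (auto simp: restr_def)
  have 3: "cle (cadd (restr ?S G1) (restr ?S G2)) G'"
    using tApp.hyps(4) tApp.prems unfolding cle_def cadd_def restr_def
    by (auto intro: subset_mset.order_trans)
  show ?case by (rule tj_mtj.tApp[OF 1 tApp.hyps(2) 2 3])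
next
  case (tSub M G1 t \<tau> n G2 u m G)
  let ?S = "fv (Sub t u)"
  have "\<forall>i\<in>fv t. case_nat M G1 i \<subseteq># case_nat M (restr ?S G1) i"
    by (auto simp: restr_def split: nat.split)
  then have 1: "tj (case_nat M (restr ?S G1)) t \<tau> n" using tSub.IH(1) by blast
  have 2: "mtj (restr ?S G2) u M m" using tSub.IH(2) by (auto simp: restr_def)
  have 3: "cle (cadd (restr ?S G1) (restr ?S G2)) G'"
    using tSub.hyps(4) tSub.prems unfolding cle_def cadd_def restr_def
    by (auto intro: subset_mset.order_trans)
  show ?case by (rule tj_mtj.tSub[OF 1 tSub.hyps(2) 2 3])
next
  case (mEmp G u)
  show ?case by (rule tj_mtj.mEmp)
next
  case (mAdd G1 u \<sigma> n G2 M m G)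
  let ?S = "fv u"
  have 1: "tj (restr ?S G1) u \<sigma> n" using mAdd.IH(1) by (auto simp: restr_def)
  have 2: "mtj (restr ?S G2) u M m" using mAdd.IH(2) by (auto simp: restr_def)
  have 3: "cle (cadd (restr ?S G1) (restr ?S G2)) G'"
    using mAdd.hyps(3) mAdd.prems unfolding cle_def cadd_def restr_def
    by (auto intro: subset_mset.order_trans)
  show ?case by (rule tj_mtj.mAdd[OF 1 2 3])
qed

lemma tj_weak: "tj G t \<tau> n \<Longrightarrow> cle G G' \<Longrightarrow> tj G' t \<tau> n"
  using tj_fv_mono(1) unfolding cle_def by blast
lemma mtj_weak: "mtj G t M n \<Longrightarrow> cle G G' \<Longrightarrow> mtj G' t M n"
  using tj_fv_mono(2) unfolding cle_def by blast

lemma cadd_comm: "cadd A B = cadd B A" by (auto simp: cadd_def add.commute)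
lemma cadd_assoc: "cadd (cadd A B) C = cadd A (cadd B C)" by (auto simp: cadd_def add.assoc)
lemma cle_add: "cle A A' \<Longrightarrow> cle B B' \<Longrightarrow> cle (cadd A B) (cadd A' B')"
  unfolding cle_def cadd_def by (auto intro: subset_mset.add_mono)
lemma cle_addL: "cle A (cadd A B)" unfolding cle_def cadd_def by auto
lemma cle_addR: "cle B (cadd A B)" unfolding cle_def cadd_def by auto
lemma cle_emp[simp]: "cle (\<lambda>_. {#}) G" unfolding cle_def by auto
lemma cadd_emp[simp]: "cadd (\<lambda>_. {#}) G = G" "cadd G (\<lambda>_. {#}) = G" unfolding cadd_def by auto

lemma cle_nonemp: "cle (cadd G1 G2) G \<Longrightarrow> G1 i \<noteq> {#} \<or> G2 i \<noteq> {#} \<Longrightarrow> G i \<noteq> {#}"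
proof
  assume a: "cle (cadd G1 G2) G" "G1 i \<noteq> {#} \<or> G2 i \<noteq> {#}" "G i = {#}"
  then have "G1 i + G2 i \<subseteq># {#}" unfolding cle_def cadd_def by metis
  then show False using a(2) by simp
qed

lemma tj_pos: "tj G t \<tau> n \<Longrightarrow> 0 < n"
  and mtj_pos: "mtj G t M n \<Longrightarrow> M \<noteq> {#} \<Longrightarrow> 0 < n"
  by (induction rule: tj_mtj.inducts) auto

lemma tj_fv: "tj G t \<tau> n \<Longrightarrow> i \<in> fv t \<Longrightarrow> G i \<noteq> {#}"
  and mtj_fv: "mtj G t M n \<Longrightarrow> M \<noteq> {#} \<Longrightarrow> i \<in> fv t \<Longrightarrow> G i \<noteq> {#}"
proof (induction arbitrary: i and i rule: tj_mtj.inducts)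
  case (tVar \<tau> G i)
  then show ?case by auto
next
  case (tLam M G t \<tau> n)
  then show ?case by fastforce
next
  case (tApp G1 t M \<tau> n G2 u m G)
  then show ?case using cle_nonemp[OF tApp.hyps(4)] by auto
next
  case (tSub M G1 t \<tau> n G2 u m G)
  then show ?case using cle_nonemp[OF tSub.hyps(4)] by fastforce
next
  case (mEmp G u)
  then show ?case by simp
next
  case (mAdd G1 u \<sigma> n G2 M m G)
  then show ?case using cle_nonemp[OF \<open>cle (cadd G1 G2) G\<close>] by blast
qed

lemma mtj_single: "tj G u \<sigma> n \<Longrightarrow> mtj G u {#\<sigma>#} n"
  using tj_mtj.mAdd[of G u \<sigma> n "\<lambda>_. {#}" "{#}" 0 G] tj_mtj.mEmp by simp

lemma mtj_join: "mtj Ga u A ma \<Longrightarrow> mtj Gb u B mb \<Longrightarrow> mtj (cadd Ga Gb) u (A + B) (ma + mb)"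
proof (induction Ga u A ma rule: tj_mtj.inducts(2)[where ?P1.0="\<lambda>_ _ _ _. True"])
  case (mEmp G u)
  then show ?case using mtj_weak cle_addR by simp
next
  case (mAdd G1 u \<sigma> n G2 M m G)
  have "mtj (cadd G2 Gb) u (M + B) (m + mb)" using mAdd by simp
  moreover have "cle (cadd G1 (cadd G2 Gb)) (cadd G Gb)"
    using cle_add[OF \<open>cle (cadd G1 G2) G\<close> cle_refl[of Gb]] by (simp add: cadd_assoc)
  ultimately show ?case using tj_mtj.mAdd[OF \<open>tj G1 u \<sigma> n\<close>] by (simp add: add.assoc)
qed auto

lemma mtj_split: "mtj G u M m \<Longrightarrow> M = A + B \<Longrightarrow>
   \<exists>Ga Gb ma mb. mtj Ga u A ma \<and> mtj Gb u B mb \<and> m = ma + mb \<and> cle (cadd Ga Gb) G"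
proof (induction G u M m arbitrary: A B rule: tj_mtj.inducts(2)[where ?P1.0="\<lambda>_ _ _ _. True"])
  case (mEmp G u)
  then show ?case by (auto intro!: exI[of _ "\<lambda>_. {#}"] tj_mtj.mEmp)
next
  case (mAdd G1 u \<sigma> n G2 M m G)
  show ?case
  proof (cases "\<sigma> \<in># A")
    case True
    then obtain A' where A: "A = add_mset \<sigma> A'" by (metis multi_member_split)
    then have "M = A' + B" using mAdd.prems by simp
    then obtain Ga Gb ma mb where h: "mtj Ga u A' ma" "mtj Gb u B mb" "m = ma + mb" "cle (cadd Ga Gb) G2"
      using mAdd.IH by blast
    have "mtj (cadd G1 Ga) u A (n + ma)" using tj_mtj.mAdd[OF \<open>tj G1 u \<sigma> n\<close> h(1) cle_refl] A by simp
    moreover have "cle (cadd (cadd G1 Ga) Gb) G"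
      using cle_trans[OF cle_add[OF cle_refl[of G1] h(4)] \<open>cle (cadd G1 G2) G\<close>] by (simp add: cadd_assoc)
    ultimately show ?thesis using h by (metis add.assoc)
  next
    case False
    then have "\<sigma> \<in># B" using mAdd.prems by (metis add_mset_add_single union_iff union_single_eq_member)
    then obtain B' where B: "B = add_mset \<sigma> B'" by (metis multi_member_split)
    then have "M = A + B'" using mAdd.prems by simp
    then obtain Ga Gb ma mb where h: "mtj Ga u A ma" "mtj Gb u B' mb" "m = ma + mb" "cle (cadd Ga Gb) G2"
      using mAdd.IH by blast
    have "mtj (cadd G1 Gb) u B (n + mb)" using tj_mtj.mAdd[OF \<open>tj G1 u \<sigma> n\<close> h(2) cle_refl] B by simp
    moreover have "cle (cadd Ga (cadd G1 Gb)) G"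
      using cle_trans[OF cle_add[OF cle_refl[of G1] h(4)] \<open>cle (cadd G1 G2) G\<close>]
      by (metis cadd_assoc cadd_comm)
    ultimately show ?thesis using h by (metis add.left_commute)
  qed
qed auto

lemma mtj_sub: "A \<subseteq># M \<Longrightarrow> mtj G u M m \<Longrightarrow> \<exists>G' m'. mtj G' u A m' \<and> m' \<le> m \<and> cle G' G"
proof -
  assume "A \<subseteq># M" "mtj G u M m"
  then obtain B where "M = A + B" by (metis subset_mset.le_iff_add)
  then show ?thesis using mtj_split[OF \<open>mtj G u M m\<close>]
    by (metis cle_addL cle_trans le_add1)
qed

lemma mtj_member: "\<sigma> \<in># M \<Longrightarrow> mtj G u M m \<Longrightarrow> \<exists>G' k. tj G' u \<sigma> k \<and> k \<le> m \<and> cle G' G"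
proof -
  assume a: "\<sigma> \<in># M" "mtj G u M m"
  then obtain G' m' where h: "mtj G' u {#\<sigma>#} m'" "m' \<le> m" "cle G' G"
    using mtj_sub[of "{#\<sigma>#}" M G u m] a by auto
  from h(1) obtain G1 G2 n m2 where "tj G1 u \<sigma> n" "mtj G2 u {#} m2" "cle (cadd G1 G2) G'" "m' = n + m2"
    by (cases rule: mtj.cases) auto
  then show ?thesis using h by (metis cle_addL cle_trans le_add1 order_trans)
qed

inductive_cases tjVarE: "tj G (Var i) \<tau> n"
inductive_cases tjLamE: "tj G (Lam t) \<tau> n"
inductive_cases tjAppE: "tj G (App t u) \<tau> n"
inductive_cases tjSubE: "tj G (Sub t u) \<tau> n"

definition ext :: "(nat \<Rightarrow> nat) \<Rightarrow> nat \<Rightarrow> nat" where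
  "ext f = case_nat 0 (\<lambda>i. Suc (f i))"

lemma ext_simps[simp]: "ext f 0 = 0" "ext f (Suc i) = Suc (f i)" by (auto simp: ext_def)

fun ren :: "(nat \<Rightarrow> nat) \<Rightarrow> trm \<Rightarrow> trm" where
  "ren f (Var i) = Var (f i)"
| "ren f (Lam t) = Lam (ren (ext f) t)"
| "ren f (App t u) = App (ren f t) (ren f u)"
| "ren f (Sub t u) = Sub (ren (ext f) t) (ren f u)"

definition decrf :: "nat \<Rightarrow> nat \<Rightarrow> nat" where
  "decrf k i = (if i \<le> k then i else i - 1)"

lemma ext_liftf: "ext (liftf k) = liftf (Suc k)"
  by (rule ext) (auto simp: ext_def liftf_def split: nat.split)
lemma ext_swapf: "ext (swapf k) = swapf (Suc k)"
  by (rule ext) (auto simp: ext_def swapf_def split: nat.split)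
lemma ext_decrf: "ext (decrf k) = decrf (Suc k)"
  by (rule ext) (auto simp: ext_def decrf_def split: nat.split)

lemma lift_ren: "lift k t = ren (liftf k) t"
  by (induction t arbitrary: k) (auto simp: liftf_def ext_liftf)
lemma swap_ren: "swap k t = ren (swapf k) t"
  by (induction t arbitrary: k) (auto simp: swapf_def ext_swapf)
lemma decr_ren: "decr k t = ren (decrf k) t"
  by (induction t arbitrary: k) (auto simp: decrf_def ext_decrf)

definition rctx :: "(nat \<Rightarrow> nat) \<Rightarrow> nat set \<Rightarrow> ctxt \<Rightarrow> ctxt" where
  "rctx f S G = (\<lambda>j. if j \<in> f ` S then G (the_inv_into S f j) else {#})"

lemma rctx_app: "inj_on f S \<Longrightarrow> i \<in> S \<Longrightarrow> rctx f S G (f i) = G i"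
  by (auto simp: rctx_def the_inv_into_f_f)

lemma rctx_cle: "inj_on f S \<Longrightarrow> \<forall>i\<in>S. G1 i + G2 i \<subseteq># G' (f i) \<Longrightarrow>
   cle (cadd (rctx f S G1) (rctx f S G2)) G'"
  by (auto simp: cle_def cadd_def rctx_def the_inv_into_f_f)

lemma cle_to: "cle (cadd G1 G2) G \<Longrightarrow> \<forall>i\<in>S. G i \<subseteq># G' (f i) \<Longrightarrow> \<forall>i\<in>S. G1 i + G2 i \<subseteq># G' (f i)"
  unfolding cle_def cadd_def by (metis subset_mset.order_trans)

lemma inj_ext: "inj_on f {i. Suc i \<in> S} \<Longrightarrow> inj_on (ext f) S"
  unfolding inj_on_def by (auto split: nat.split simp: ext_def) 

lemma tj_ren:
  "tj G t \<tau> n \<Longrightarrow> inj_on f (fv t) \<Longrightarrow> (\<forall>i\<in>fv t. G i \<subseteq># G' (f i)) \<Longrightarrow> tj G' (ren f t) \<tau> n"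
  "mtj G t M n \<Longrightarrow> inj_on f (fv t) \<Longrightarrow> (\<forall>i\<in>fv t. G i \<subseteq># G' (f i)) \<Longrightarrow> mtj G' (ren f t) M n"
proof (induction arbitrary: f G' and f G' rule: tj_mtj.inducts)
  case (tVar \<tau> G i)
  then have "\<tau> \<in># G' (f i)" by (auto intro: mset_subset_eqD)
  then show ?case using tj_mtj.tVar[of \<tau> G' "f i"] by simp
next
  case (tLam M G t \<tau> n)
  have "inj_on (ext f) (fv t)" using tLam.prems(1) by (auto intro: inj_ext)
  moreover have "\<forall>i\<in>fv t. case_nat M G i \<subseteq># case_nat M G' (ext f i)"
    using tLam.prems(2) by (auto split: nat.split)
  ultimately show ?case using tLam.IH by (auto intro: tj_mtj.tLam)
next
  case (tApp G1 t M \<tau> n G2 u m G)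
  let ?S = "fv (App t u)"
  have i1: "inj_on f (fv t)" "inj_on f (fv u)" using tApp.prems(1) by (auto intro: inj_on_subset)
  have 1: "tj (rctx f ?S G1) (ren f t) (Arr M \<tau>) n"
    using tApp.IH(1)[OF i1(1)] tApp.prems(1) by (auto simp: rctx_app)
  have 2: "mtj (rctx f ?S G2) (ren f u) M m"
    using tApp.IH(2)[OF i1(2)] tApp.prems(1) by (auto simp: rctx_app)
  have 3: "cle (cadd (rctx f ?S G1) (rctx f ?S G2)) G'"
    by (rule rctx_cle[OF tApp.prems(1) cle_to[of G1 G2 G ?S G' f, OF tApp.hyps(4) tApp.prems(2)]])
  show ?case using tj_mtj.tApp[OF 1 tApp.hyps(2) 2 3] by simp
next
  case (tSub M G1 t \<tau> n G2 u m G)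
  let ?S = "fv (Sub t u)"
  have i1: "inj_on (ext f) (fv t)" "inj_on f (fv u)" using tSub.prems(1)
    by (auto intro: inj_on_subset inj_ext)
  have "\<forall>i\<in>fv t. case_nat M G1 i \<subseteq># case_nat M (rctx f ?S G1) (ext f i)"
    using tSub.prems(1) by (auto split: nat.split simp: rctx_app)
  then have 1: "tj (case_nat M (rctx f ?S G1)) (ren (ext f) t) \<tau> n"
    using tSub.IH(1)[OF i1(1)] by blast
  have 2: "mtj (rctx f ?S G2) (ren f u) M m"
    using tSub.IH(2)[OF i1(2)] tSub.prems(1) by (auto simp: rctx_app)
  have 3: "cle (cadd (rctx f ?S G1) (rctx f ?S G2)) G'"
    by (rule rctx_cle[OF tSub.prems(1) cle_to[of G1 G2 G ?S G' f, OF tSub.hyps(4) tSub.prems(2)]])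
  show ?case using tj_mtj.tSub[OF 1 tSub.hyps(2) 2 3] by simp
next
  case (mEmp G u)
  then show ?case by (auto intro: tj_mtj.mEmp)
next
  case (mAdd G1 u \<sigma> n G2 M m G)
  let ?S = "fv u"
  have 1: "tj (rctx f ?S G1) (ren f u) \<sigma> n"
    using mAdd.IH(1) mAdd.prems(1) by (auto simp: rctx_app)
  have 2: "mtj (rctx f ?S G2) (ren f u) M m"
    using mAdd.IH(2) mAdd.prems(1) by (auto simp: rctx_app)
  have 3: "cle (cadd (rctx f ?S G1) (rctx f ?S G2)) G'"
    by (rule rctx_cle[OF mAdd.prems(1) cle_to[of G1 G2 G ?S G' f, OF mAdd.hyps(3) mAdd.prems(2)]])
  show ?case using tj_mtj.mAdd[OF 1 2 3] by simp
qed

lemma mtj_back0: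
  "mtj G s' M m \<Longrightarrow> (\<forall>G \<sigma> n. tj G s' \<sigma> n \<longrightarrow> tj (G \<circ> f) s \<sigma> n) \<Longrightarrow> mtj (G \<circ> f) s M m"
proof (induction G s' M m rule: tj_mtj.inducts(2)[where ?P1.0="\<lambda>_ _ _ _. True"])
  case (mEmp G u)
  show ?case by (rule tj_mtj.mEmp)
next
  case (mAdd G1 u \<sigma> n G2 M m G)
  have "cle (cadd (G1 \<circ> f) (G2 \<circ> f)) (G \<circ> f)" using \<open>cle (cadd G1 G2) G\<close>
    by (auto simp: cle_def cadd_def)
  then show ?case using tj_mtj.mAdd mAdd by blast
qed auto

lemma mtj_back:
  assumes "\<And>G \<sigma> n. tj G s' \<sigma> n \<Longrightarrow> tj (G \<circ> f) s \<sigma> n"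
  shows "mtj G s' M m \<Longrightarrow> mtj (G \<circ> f) s M m"
  using mtj_back0 assms by blast

lemma tj_ren_back: "tj G (ren f t) \<tau> n \<Longrightarrow> tj (G \<circ> f) t \<tau> n"
proof (induction t arbitrary: f G \<tau> n)
  case (Var i)
  then have "\<tau> \<in># G (f i)" "n = 1" by (auto elim: tjVarE)
  then show ?case using tj_mtj.tVar[of \<tau> "G \<circ> f" i] by (simp add: comp_def)
next
  case (Lam t)
  from Lam.prems obtain M \<tau>' n' where h: "\<tau> = Arr M \<tau>'" "n = Suc n'" "tj (case_nat M G) (ren (ext f) t) \<tau>' n'"
    by (auto elim: tjLamE)
  have e: "case_nat M G \<circ> ext f = case_nat M (G \<circ> f)" by (rule ext) (auto split: nat.split)
  have "tj (case_nat M (G \<circ> f)) t \<tau>' n'" using Lam.IH[OF h(3)] unfolding e .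
  then show ?case unfolding h(1,2) by (rule tj_mtj.tLam)
next
  case (App t u)
  from App.prems obtain G1 M n1 G2 m where h: "tj G1 (ren f t) (Arr M \<tau>) n1" "M \<noteq> {#}"
    "mtj G2 (ren f u) M m" "cle (cadd G1 G2) G" "n = Suc (n1 + m)"
    by (auto elim: tjAppE)
  have "mtj (G2 \<circ> f) u M m" using mtj_back[OF App.IH(2) h(3)] .
  moreover have "cle (cadd (G1 \<circ> f) (G2 \<circ> f)) (G \<circ> f)" using h(4) by (auto simp: cle_def cadd_def)
  ultimately show ?case using tj_mtj.tApp[OF App.IH(1)[OF h(1)] h(2)] h(5) by blast
next
  case (Sub t u)
  from Sub.prems obtain G1 M n1 G2 m where h: "tj (case_nat M G1) (ren (ext f) t) \<tau> n1" "M \<noteq> {#}"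
    "mtj G2 (ren f u) M m" "cle (cadd G1 G2) G" "n = n1 + m"
    by (auto elim: tjSubE)
  have "case_nat M G1 \<circ> ext f = case_nat M (G1 \<circ> f)" by (rule ext) (auto split: nat.split)
  then have "tj (case_nat M (G1 \<circ> f)) t \<tau> n1" using Sub.IH(1)[OF h(1)] by simp
  moreover have "mtj (G2 \<circ> f) u M m" using mtj_back[OF Sub.IH(2) h(3)] .
  moreover have "cle (cadd (G1 \<circ> f) (G2 \<circ> f)) (G \<circ> f)" using h(4) by (auto simp: cle_def cadd_def)
  ultimately show ?case using tj_mtj.tSub h(2) h(5) by blast
qed

lemma mtj_ren_back: "mtj G (ren f t) M n \<Longrightarrow> mtj (G \<circ> f) t M n"
  using mtj_back[OF tj_ren_back] .

lemma inj_decrf0: "0 \<notin> S \<Longrightarrow> inj_on (decrf 0) S"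
  unfolding inj_on_def decrf_def by (auto split: if_splits)
lemma aux12: "\<not> y \<le> Suc 0 \<Longrightarrow> y - Suc 0 \<le> Suc 0 \<Longrightarrow> y - Suc 0 = Suc 0" by arith
lemma inj_decrf1: "Suc 0 \<notin> S \<Longrightarrow> inj_on (decrf (Suc 0)) S"
  unfolding inj_on_def decrf_def by (auto split: if_splits dest: aux12)

lemma tj_decr0: "0 \<notin> fv t \<Longrightarrow> tj (case_nat M G) t \<tau> n \<Longrightarrow> tj G (decr 0 t) \<tau> n"
  unfolding decr_ren
  by (erule tj_ren(1)) (auto intro: inj_decrf0 simp: decrf_def split: nat.split)
lemma mtj_decr0: "0 \<notin> fv t \<Longrightarrow> mtj (case_nat M G) t N n \<Longrightarrow> mtj G (decr 0 t) N n"
  unfolding decr_ren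
  by (erule tj_ren(2)) (auto intro: inj_decrf0 simp: decrf_def split: nat.split)
lemma tj_decr1: "Suc 0 \<notin> fv t \<Longrightarrow> tj (case_nat A (case_nat B G)) t \<tau> n \<Longrightarrow> tj (case_nat A G) (decr 1 t) \<tau> n"
  unfolding decr_ren
  by (erule tj_ren(1)) (auto intro: inj_decrf1 simp: decrf_def split: nat.split)
lemma tj_swap0: "tj (case_nat A (case_nat B G)) t \<tau> n \<Longrightarrow> tj (case_nat B (case_nat A G)) (swap 0 t) \<tau> n"
  unfolding swap_ren
  by (erule tj_ren(1)) (auto simp: swapf_def inj_on_def split: nat.split)
lemma mtj_lift0: "mtj G u M m \<Longrightarrow> mtj (case_nat X G) (lift 0 u) M m"
  unfolding lift_ren
  by (erule tj_ren(2)) (auto simp: liftf_def inj_on_def split: nat.split)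
lemma tj_lift0_back: "tj (case_nat X G) (lift 0 s) \<sigma> n \<Longrightarrow> tj G s \<sigma> n"
proof -
  assume "tj (case_nat X G) (lift 0 s) \<sigma> n"
  then have "tj (case_nat X G \<circ> liftf 0) s \<sigma> n" unfolding lift_ren by (rule tj_ren_back)
  moreover have "case_nat X G \<circ> liftf 0 = G" by (rule ext) (simp add: liftf_def)
  ultimately show ?thesis by simp
qed
lemma mtj_lift0_back: "mtj (case_nat X G) (lift 0 s) M n \<Longrightarrow> mtj G s M n"
proof -
  assume "mtj (case_nat X G) (lift 0 s) M n"
  then have "mtj (case_nat X G \<circ> liftf 0) s M n" unfolding lift_ren by (rule mtj_ren_back)
  moreover have "case_nat X G \<circ> liftf 0 = G" by (rule ext) (simp add: liftf_def)
  ultimately show ?thesis by simp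
qed

definition tl_ctx :: "ctxt \<Rightarrow> ctxt" where "tl_ctx G = (\<lambda>i. G (Suc i))"

lemma cons_tl: "case_nat (G 0) (tl_ctx G) = G"
  by (rule ext) (auto simp: tl_ctx_def split: nat.split)

lemma tj_Sub_from:
  assumes "tj D v \<sigma> k" "0 \<in> fv v" "mtj Gu u M m" "D 0 \<subseteq># M"
  shows "\<exists>G' m'. tj G' (Sub v u) \<sigma> (k + m') \<and> m' \<le> m \<and> cle G' (cadd (tl_ctx D) Gu)"
proof -
  obtain G1 m1 where h: "mtj G1 u (D 0) m1" "m1 \<le> m" "cle G1 Gu" using mtj_sub[OF assms(4,3)] by blast
  have ne: "D 0 \<noteq> {#}" using tj_fv[OF assms(1,2)] .
  have "tj (case_nat (D 0) (tl_ctx D)) v \<sigma> k" using assms(1) cons_tl by simp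
  from tj_mtj.tSub[OF this ne h(1) cle_refl] show ?thesis
    using h cle_add[OF cle_refl h(3)] by blast
qed

lemma mtj_Sub_from:
  "mtj D v N n \<Longrightarrow> 0 \<in> fv v \<Longrightarrow> mtj Gu u M m \<Longrightarrow> D 0 \<subseteq># M \<Longrightarrow>
   \<exists>G' m'. mtj G' (Sub v u) N (n + m') \<and> m' \<le> m \<and> cle G' (cadd (tl_ctx D) Gu)"
proof (induction D v N n arbitrary: Gu M m rule: tj_mtj.inducts(2)[where ?P1.0="\<lambda>_ _ _ _. True"])
  case (mEmp G u)
  then show ?case by (auto intro!: exI[of _ "\<lambda>_. {#}"] tj_mtj.mEmp)
next
  case (mAdd G1 v \<sigma> k G2 N n G)
  have s: "G1 0 + G2 0 \<subseteq># M" using mAdd.prems(3) \<open>cle (cadd G1 G2) G\<close>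
    unfolding cle_def cadd_def by (metis subset_mset.order_trans)
  define R where "R = M - G1 0"
  have g1: "G1 0 \<subseteq># M" using s by (metis subset_mset.le_add_same_cancel1 subset_mset.order_trans subset_mset.zero_le)
  have MR: "M = G1 0 + R" "G2 0 \<subseteq># R" unfolding R_def
    using g1 s subset_mset.le_diff_conv2[OF g1, of "G2 0"] by (auto simp: add.commute)
  obtain Ga Gb ma mb where sp: "mtj Ga u (G1 0) ma" "mtj Gb u R mb" "m = ma + mb" "cle (cadd Ga Gb) Gu"
    using mtj_split[OF mAdd.prems(2) MR(1)] by blast
  obtain H1 m1 where h1: "tj H1 (Sub v u) \<sigma> (k + m1)" "m1 \<le> ma" "cle H1 (cadd (tl_ctx G1) Ga)"
    using tj_Sub_from[OF \<open>tj G1 v \<sigma> k\<close> mAdd.prems(1) sp(1)] by blast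
  obtain H2 m2 where h2: "mtj H2 (Sub v u) N (n + m2)" "m2 \<le> mb" "cle H2 (cadd (tl_ctx G2) Gb)"
    using mAdd.IH[OF mAdd.prems(1) sp(2) MR(2)] by blast
  have c: "cle (cadd H1 H2) (cadd (tl_ctx G) Gu)"
  proof -
    have "cle (cadd H1 H2) (cadd (cadd (tl_ctx G1) Ga) (cadd (tl_ctx G2) Gb))" using cle_add[OF h1(3) h2(3)] .
    moreover have "cle (cadd (cadd (tl_ctx G1) Ga) (cadd (tl_ctx G2) Gb)) (cadd (tl_ctx G) Gu)"
      using \<open>cle (cadd G1 G2) G\<close> sp(4) unfolding cle_def cadd_def tl_ctx_def
      by (metis (no_types, lifting) add.assoc add.commute subset_mset.add_mono)
    ultimately show ?thesis by (rule cle_trans)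
  qed
  have "mtj (cadd H1 H2) (Sub v u) (add_mset \<sigma> N) ((k + m1) + (n + m2))"
    by (rule tj_mtj.mAdd[OF h1(1) h2(1) cle_refl])
  then show ?case using c h1(2) h2(2) sp(3)
    by (intro exI[of _ "cadd H1 H2"] exI[of _ "m1 + m2"]) (auto simp: algebra_simps)
qed auto

inductive str_rule :: "trm \<Rightarrow> trm \<Rightarrow> bool" where
  sB:     "str_rule (App (Lam t) u) (Sub t u)"
| sD:    "str_rule (Sub (Var 0) u) u"
| sW:     "0 \<notin> fv t \<Longrightarrow> str_rule (Sub t u) (decr 0 t)"

lemma es_rule_split: "es_rule s s' \<Longrightarrow> str_rule s s' \<or> prop_rule s s'"
  by (induction rule: es_rule.induct) (blast intro: str_rule.intros prop_rule.intros)+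

lemma cle_cons: "cle (cadd D1 D2) (case_nat M G1) \<Longrightarrow>
   D1 0 + D2 0 \<subseteq># M \<and> cle (cadd (tl_ctx D1) (tl_ctx D2)) G1"
  unfolding cle_def cadd_def tl_ctx_def by (metis nat.simps(4) nat.simps(5))

lemma cle_four: "cle (cadd A B) G1 \<Longrightarrow> cle (cadd C D) G2 \<Longrightarrow> cle (cadd (cadd A C) (cadd B D)) (cadd G1 G2)"
proof -
  assume a: "cle (cadd A B) G1" "cle (cadd C D) G2"
  have "cadd (cadd A C) (cadd B D) = cadd (cadd A B) (cadd C D)"
    by (rule ext) (simp add: cadd_def algebra_simps)
  then show ?thesis using cle_add[OF a] by simp
qed

lemma cadd_cons: "cadd (case_nat A G) (case_nat B H) = case_nat (A + B) (cadd G H)"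
  by (rule ext) (auto simp: cadd_def split: nat.split)

lemma cle_cons_mono: "A \<subseteq># B \<Longrightarrow> cle G H \<Longrightarrow> cle (case_nat A G) (case_nat B H)"
  by (auto simp: cle_def split: nat.split)

lemma tj_decomp: "tj (case_nat M D) t \<tau> n \<Longrightarrow> tj (case_nat M (case_nat (D 0) (tl_ctx D))) t \<tau> n"
  by (simp add: cons_tl)

lemma sub_left: "A + B \<subseteq># M \<Longrightarrow> A \<subseteq># M"
  by (metis subset_mset.le_add_same_cancel1 subset_mset.order_trans subset_mset.zero_le)
lemma sub_right: "A + B \<subseteq># M \<Longrightarrow> B \<subseteq># M"
  by (metis add.commute sub_left)

lemma split_rest: "A + B \<subseteq># M \<Longrightarrow> M = A + (M - A) \<and> B \<subseteq># M - A"
  using sub_left[of A B M] subset_mset.le_diff_conv2[of A M B] by (auto simp: add.commute)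

lemma SR_str:
  assumes "str_rule s s'" "tj G s \<tau> n"
  shows "\<exists>n'<n. tj G s' \<tau> n'"
  using assms(1)
proof cases
  case (sB t u)
  from assms(2)[unfolded sB] obtain G1 M n1 G2 m where
    h: "tj G1 (Lam t) (Arr M \<tau>) n1" "M \<noteq> {#}" "mtj G2 u M m" "cle (cadd G1 G2) G" "n = Suc (n1 + m)"
    by (auto elim: tjAppE)
  from h(1) obtain n1' where "tj (case_nat M G1) t \<tau> n1'" "n1 = Suc n1'" by (auto elim: tjLamE)
  then have "tj G (Sub t u) \<tau> (n1' + m)" using tj_mtj.tSub[OF _ h(2,3,4)] by blast
  then show ?thesis using h(5) sB \<open>n1 = Suc n1'\<close> by (intro exI[of _ "n1' + m"]) auto
next
  case sD
  from assms(2)[unfolded sD] obtain G1 M n1 G2 m where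
    h: "tj (case_nat M G1) (Var 0) \<tau> n1" "M \<noteq> {#}" "mtj G2 s' M m" "cle (cadd G1 G2) G" "n = n1 + m"
    by (auto elim: tjSubE)
  from h(1) have "\<tau> \<in># M" "n1 = 1" by (auto elim: tjVarE)
  then obtain G' k where g: "tj G' s' \<tau> k" "k \<le> m" "cle G' G2" using mtj_member h(3) by blast
  moreover have "cle G2 G" using h(4) cle_addR cle_trans by blast
  ultimately have "tj G s' \<tau> k" using tj_weak cle_trans by blast
  then show ?thesis using g(2) h(5) \<open>n1 = 1\<close> by (intro exI[of _ k]) auto
next
  case (sW t u)
  from assms(2)[unfolded sW] obtain G1 M n1 G2 m where
    h: "tj (case_nat M G1) t \<tau> n1" "M \<noteq> {#}" "mtj G2 u M m" "cle (cadd G1 G2) G" "n = n1 + m"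
    by (auto elim: tjSubE)
  have "tj G1 (decr 0 t) \<tau> n1" using tj_decr0[OF sW(3) h(1)] .
  moreover have "cle G1 G" using h(4) cle_addL cle_trans by blast
  moreover have "0 < m" using mtj_pos[OF h(3,2)] .
  ultimately show ?thesis using sW h(5) by (intro exI[of _ n1]) (auto intro: tj_weak)
qed

lemma SR_prop:
  assumes "prop_rule s s'" "tj G s \<tau> n"
  shows "\<exists>n'\<le>n. tj G s' \<tau> n'"
  using assms(1)
proof cases
  case (app_r t v u)
  from assms(2)[unfolded app_r] obtain G1 M nA G2 m where
    h: "tj (case_nat M G1) (App t v) \<tau> nA" "M \<noteq> {#}" "mtj G2 u M m" "cle (cadd G1 G2) G" "n = nA + m"
    by (auto elim: tjSubE)
  from h(1) obtain D1 N n1 D2 n2 where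
    a: "tj D1 t (Arr N \<tau>) n1" "N \<noteq> {#}" "mtj D2 v N n2" "cle (cadd D1 D2) (case_nat M G1)" "nA = Suc (n1 + n2)"
    by (auto elim: tjAppE)
  note c = cle_cons[OF a(4)]
  have t': "tj (tl_ctx D1) (decr 0 t) (Arr N \<tau>) n1"
    using tj_decr0[OF app_r(3)] a(1) cons_tl by metis
  obtain H m' where v': "mtj H (Sub v u) N (n2 + m')" "m' \<le> m" "cle H (cadd (tl_ctx D2) G2)"
    using mtj_Sub_from[OF a(3) app_r(4) h(3) sub_right[OF conjunct1[OF c]]] by blast
  have cl: "cle (cadd (tl_ctx D1) H) G"
  proof -
    have "cle (cadd (tl_ctx D1) H) (cadd (tl_ctx D1) (cadd (tl_ctx D2) G2))" using cle_add[OF cle_refl v'(3)] .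
    moreover have "cle (cadd (tl_ctx D1) (cadd (tl_ctx D2) G2)) (cadd G1 G2)"
      using cle_add[OF conjunct2[OF c] cle_refl[of G2]] by (simp add: cadd_assoc)
    ultimately show ?thesis using h(4) cle_trans by blast
  qed
  have "tj G s' \<tau> (Suc (n1 + (n2 + m')))" using tj_mtj.tApp[OF t' a(2) v'(1) cl] app_r by simp
  then show ?thesis using h(5) a(5) v'(2) by (intro exI[of _ "Suc (n1 + (n2 + m'))"]) auto
next
  case (app_l t v u)
  from assms(2)[unfolded app_l] obtain G1 M nA G2 m where
    h: "tj (case_nat M G1) (App t v) \<tau> nA" "M \<noteq> {#}" "mtj G2 u M m" "cle (cadd G1 G2) G" "n = nA + m"
    by (auto elim: tjSubE)
  from h(1) obtain D1 N n1 D2 n2 where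
    a: "tj D1 t (Arr N \<tau>) n1" "N \<noteq> {#}" "mtj D2 v N n2" "cle (cadd D1 D2) (case_nat M G1)" "nA = Suc (n1 + n2)"
    by (auto elim: tjAppE)
  note c = cle_cons[OF a(4)]
  have v': "mtj (tl_ctx D2) (decr 0 v) N n2"
    using mtj_decr0[OF app_l(4)] a(3) cons_tl by metis
  obtain H m' where t': "tj H (Sub t u) (Arr N \<tau>) (n1 + m')" "m' \<le> m" "cle H (cadd (tl_ctx D1) G2)"
    using tj_Sub_from[OF a(1) app_l(3) h(3) sub_left[OF conjunct1[OF c]]] by blast
  have cl: "cle (cadd H (tl_ctx D2)) G"
  proof -
    have "cle (cadd H (tl_ctx D2)) (cadd (cadd (tl_ctx D1) G2) (tl_ctx D2))" using cle_add[OF t'(3) cle_refl] .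
    moreover have "cle (cadd (cadd (tl_ctx D1) G2) (tl_ctx D2)) (cadd G1 G2)"
      using cle_add[OF conjunct2[OF c] cle_refl[of G2]] by (metis cadd_assoc cadd_comm)
    ultimately show ?thesis using h(4) cle_trans by blast
  qed
  have "tj G s' \<tau> (Suc (n1 + m' + n2))" using tj_mtj.tApp[OF t'(1) a(2) v' cl] app_l by simp
  then show ?thesis using h(5) a(5) t'(2) by (intro exI[of _ "Suc (n1 + m' + n2)"]) auto
next
  case (app t v u)
  from assms(2)[unfolded app] obtain G1 M nA G2 m where
    h: "tj (case_nat M G1) (App t v) \<tau> nA" "M \<noteq> {#}" "mtj G2 u M m" "cle (cadd G1 G2) G" "n = nA + m"
    by (auto elim: tjSubE)
  from h(1) obtain D1 N n1 D2 n2 where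
    a: "tj D1 t (Arr N \<tau>) n1" "N \<noteq> {#}" "mtj D2 v N n2" "cle (cadd D1 D2) (case_nat M G1)" "nA = Suc (n1 + n2)"
    by (auto elim: tjAppE)
  note c = cle_cons[OF a(4)]
  note sr = split_rest[OF conjunct1[OF c]]
  obtain Ga Gb ma mb where sp: "mtj Ga u (D1 0) ma" "mtj Gb u (M - D1 0) mb" "m = ma + mb" "cle (cadd Ga Gb) G2"
    using mtj_split[OF h(3) conjunct1[OF sr]] by blast
  obtain H1 m1 where t': "tj H1 (Sub t u) (Arr N \<tau>) (n1 + m1)" "m1 \<le> ma" "cle H1 (cadd (tl_ctx D1) Ga)"
    using tj_Sub_from[OF a(1) app(3) sp(1) subset_mset.order_refl] by blast
  obtain H2 m2 where v': "mtj H2 (Sub v u) N (n2 + m2)" "m2 \<le> mb" "cle H2 (cadd (tl_ctx D2) Gb)"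
    using mtj_Sub_from[OF a(3) app(4) sp(2) conjunct2[OF sr]] by blast
  have cl: "cle (cadd H1 H2) G"
  proof -
    have "cle (cadd H1 H2) (cadd (cadd (tl_ctx D1) Ga) (cadd (tl_ctx D2) Gb))" using cle_add[OF t'(3) v'(3)] .
    moreover have "cle (cadd (cadd (tl_ctx D1) Ga) (cadd (tl_ctx D2) Gb)) (cadd G1 G2)"
      using cle_four[OF conjunct2[OF c] sp(4)] .
    ultimately show ?thesis using h(4) cle_trans by blast
  qed
  have "tj G s' \<tau> (Suc (n1 + m1 + (n2 + m2)))" using tj_mtj.tApp[OF t'(1) a(2) v'(1) cl] app by simp
  then show ?thesis using h(5) a(5) t'(2) v'(2) sp(3) by (intro exI[of _ "Suc (n1 + m1 + (n2 + m2))"]) auto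
next
  case (lam t u)
  from assms(2)[unfolded lam] obtain G1 M nL G2 m where
    h: "tj (case_nat M G1) (Lam t) \<tau> nL" "M \<noteq> {#}" "mtj G2 u M m" "cle (cadd G1 G2) G" "n = nL + m"
    by (auto elim: tjSubE)
  from h(1) obtain K \<tau>' n' where a: "\<tau> = Arr K \<tau>'" "nL = Suc n'" "tj (case_nat K (case_nat M G1)) t \<tau>' n'"
    by (auto elim: tjLamE)
  have t': "tj (case_nat M (case_nat K G1)) (swap 0 t) \<tau>' n'" using tj_swap0[OF a(3)] .
  have u': "mtj (case_nat {#} G2) (lift 0 u) M m" using mtj_lift0[OF h(3)] .
  have cl: "cle (cadd (case_nat K G1) (case_nat {#} G2)) (case_nat K G)"
    unfolding cadd_cons using cle_cons_mono[OF _ h(4)] by simp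
  have "tj (case_nat K G) (Sub (swap 0 t) (lift 0 u)) \<tau>' (n' + m)" using tj_mtj.tSub[OF t' h(2) u' cl] .
  then have "tj G (Lam (Sub (swap 0 t) (lift 0 u))) \<tau> (Suc (n' + m))" unfolding a(1) by (rule tj_mtj.tLam)
  then show ?thesis using lam h(5) a(2) by auto
next
  case (comp1 t u v)
  from assms(2)[unfolded comp1] obtain G1 Mv nA G2 mv where
    h: "tj (case_nat Mv G1) (Sub t u) \<tau> nA" "Mv \<noteq> {#}" "mtj G2 v Mv mv" "cle (cadd G1 G2) G" "n = nA + mv"
    by (auto elim: tjSubE)
  from h(1) obtain Mu D1 nt D2 mu where
    a: "tj (case_nat Mu D1) t \<tau> nt" "Mu \<noteq> {#}" "mtj D2 u Mu mu" "cle (cadd D1 D2) (case_nat Mv G1)" "nA = nt + mu"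
    by (auto elim: tjSubE)
  note c = cle_cons[OF a(4)]
  have t': "tj (case_nat Mu (tl_ctx D1)) (decr 1 t) \<tau> nt"
    using tj_decr1[OF _ tj_decomp[OF a(1)]] comp1(3) by simp
  obtain H m' where u': "mtj H (Sub u v) Mu (mu + m')" "m' \<le> mv" "cle H (cadd (tl_ctx D2) G2)"
    using mtj_Sub_from[OF a(3) comp1(4) h(3) sub_right[OF conjunct1[OF c]]] by blast
  have cl: "cle (cadd (tl_ctx D1) H) G"
  proof -
    have "cle (cadd (tl_ctx D1) H) (cadd (tl_ctx D1) (cadd (tl_ctx D2) G2))" using cle_add[OF cle_refl u'(3)] .
    moreover have "cle (cadd (tl_ctx D1) (cadd (tl_ctx D2) G2)) (cadd G1 G2)"
      using cle_add[OF conjunct2[OF c] cle_refl[of G2]] by (simp add: cadd_assoc)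
    ultimately show ?thesis using h(4) cle_trans by blast
  qed
  have "tj G s' \<tau> (nt + (mu + m'))" using tj_mtj.tSub[OF t' a(2) u'(1) cl] comp1 by simp
  then show ?thesis using h(5) a(5) u'(2) by (intro exI[of _ "nt + (mu + m')"]) auto
next
  case (comp2 t u v)
  from assms(2)[unfolded comp2] obtain G1 Mv nA G2 mv where
    h: "tj (case_nat Mv G1) (Sub t u) \<tau> nA" "Mv \<noteq> {#}" "mtj G2 v Mv mv" "cle (cadd G1 G2) G" "n = nA + mv"
    by (auto elim: tjSubE)
  from h(1) obtain Mu D1 nt D2 mu where
    a: "tj (case_nat Mu D1) t \<tau> nt" "Mu \<noteq> {#}" "mtj D2 u Mu mu" "cle (cadd D1 D2) (case_nat Mv G1)" "nA = nt + mu"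
    by (auto elim: tjSubE)
  note c = cle_cons[OF a(4)]
  note sr = split_rest[OF conjunct1[OF c]]
  have ne: "D1 0 \<noteq> {#}" using tj_fv[OF a(1) comp2(3)] by simp
  obtain Ga Gb ma mb where sp: "mtj Ga v (D1 0) ma" "mtj Gb v (Mv - D1 0) mb" "mv = ma + mb" "cle (cadd Ga Gb) G2"
    using mtj_split[OF h(3) conjunct1[OF sr]] by blast
  have t': "tj (case_nat (D1 0) (case_nat Mu (tl_ctx D1))) (swap 0 t) \<tau> nt"
    using tj_swap0[OF tj_decomp[OF a(1)]] .
  have v1: "mtj (case_nat {#} Ga) (lift 0 v) (D1 0) ma" using mtj_lift0[OF sp(1)] .
  have cl1: "cle (cadd (case_nat Mu (tl_ctx D1)) (case_nat {#} Ga)) (case_nat Mu (cadd (tl_ctx D1) Ga))"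
    unfolding cadd_cons by simp
  have inner: "tj (case_nat Mu (cadd (tl_ctx D1) Ga)) (Sub (swap 0 t) (lift 0 v)) \<tau> (nt + ma)"
    using tj_mtj.tSub[OF t' ne v1 cl1] .
  obtain H m' where u': "mtj H (Sub u v) Mu (mu + m')" "m' \<le> mb" "cle H (cadd (tl_ctx D2) Gb)"
    using mtj_Sub_from[OF a(3) comp2(4) sp(2) conjunct2[OF sr]] by blast
  have cl: "cle (cadd (cadd (tl_ctx D1) Ga) H) G"
  proof -
    have "cle (cadd (cadd (tl_ctx D1) Ga) H) (cadd (cadd (tl_ctx D1) Ga) (cadd (tl_ctx D2) Gb))"
      using cle_add[OF cle_refl u'(3)] .
    moreover have "cle (cadd (cadd (tl_ctx D1) Ga) (cadd (tl_ctx D2) Gb)) (cadd G1 G2)"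
      using cle_four[OF conjunct2[OF c] sp(4)] .
    ultimately show ?thesis using h(4) cle_trans by blast
  qed
  have "tj G s' \<tau> (nt + ma + (mu + m'))" using tj_mtj.tSub[OF inner a(2) u'(1) cl] comp2 by simp
  then show ?thesis using h(5) a(5) u'(2) sp(3) by (intro exI[of _ "nt + ma + (mu + m')"]) auto
qed

lemma SR_cs:
  assumes "cs_rule s s'" "tj G s \<tau> n"
  shows "\<exists>n'\<le>n. tj G s' \<tau> n'"
  using assms(1)
proof cases
  case (1 u t v)
  from assms(2)[unfolded 1] obtain G1 Mv nA G2 mv where
    h: "tj (case_nat Mv G1) (Sub t u) \<tau> nA" "Mv \<noteq> {#}" "mtj G2 v Mv mv" "cle (cadd G1 G2) G" "n = nA + mv"
    by (auto elim: tjSubE)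
  from h(1) obtain Mu D1 nt D2 mu where
    a: "tj (case_nat Mu D1) t \<tau> nt" "Mu \<noteq> {#}" "mtj D2 u Mu mu" "cle (cadd D1 D2) (case_nat Mv G1)" "nA = nt + mu"
    by (auto elim: tjSubE)
  note c = cle_cons[OF a(4)]
  have "tj (case_nat Mu (case_nat Mv (tl_ctx D1))) t \<tau> nt"
    using tj_weak[OF tj_decomp[OF a(1)]] cle_cons_mono[OF subset_mset.order_refl cle_cons_mono[OF sub_left[OF conjunct1[OF c]] cle_refl]]
    by blast
  then have t': "tj (case_nat Mv (case_nat Mu (tl_ctx D1))) (swap 0 t) \<tau> nt" by (rule tj_swap0)
  have v': "mtj (case_nat {#} G2) (lift 0 v) Mv mv" using mtj_lift0[OF h(3)] .
  have inner: "tj (case_nat Mu (cadd (tl_ctx D1) G2)) (Sub (swap 0 t) (lift 0 v)) \<tau> (nt + mv)"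
    using tj_mtj.tSub[OF t' h(2) v'] cadd_cons[of Mu "tl_ctx D1" "{#}" G2] by simp
  have u': "mtj (tl_ctx D2) (decr 0 u) Mu mu" using mtj_decr0[OF 1(3)] a(3) cons_tl by metis
  have cl: "cle (cadd (cadd (tl_ctx D1) G2) (tl_ctx D2)) G"
  proof -
    have "cle (cadd (cadd (tl_ctx D1) G2) (tl_ctx D2)) (cadd G1 G2)"
      using cle_add[OF conjunct2[OF c] cle_refl[of G2]] by (metis cadd_assoc cadd_comm)
    then show ?thesis using h(4) cle_trans by blast
  qed
  have "tj G s' \<tau> (nt + mv + mu)" using tj_mtj.tSub[OF inner a(2) u' cl] 1 by simp
  then show ?thesis using h(5) a(5) by (intro exI[of _ "nt + mv + mu"]) auto
qed

lemma mtj_map_le0: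
  "mtj G u M m \<Longrightarrow> (\<forall>G \<sigma> k. tj G u \<sigma> k \<longrightarrow> (\<exists>k'\<le>k. tj G u' \<sigma> k')) \<Longrightarrow> \<exists>m'\<le>m. mtj G u' M m'"
proof (induction G u M m rule: tj_mtj.inducts(2)[where ?P1.0="\<lambda>_ _ _ _. True"])
  case (mEmp G u)
  then show ?case by (auto intro: tj_mtj.mEmp)
next
  case (mAdd G1 u \<sigma> n G2 M m G)
  then obtain k' m' where "tj G1 u' \<sigma> k'" "k' \<le> n" "mtj G2 u' M m'" "m' \<le> m" by blast
  then show ?case using tj_mtj.mAdd[of G1 u' \<sigma> k' G2 M m' G] \<open>cle (cadd G1 G2) G\<close>
    by (intro exI[of _ "k' + m'"]) auto
qed auto

lemma mtj_map_lt0: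
  "mtj G u M m \<Longrightarrow> M \<noteq> {#} \<Longrightarrow> (\<forall>G \<sigma> k. tj G u \<sigma> k \<longrightarrow> (\<exists>k'<k. tj G u' \<sigma> k')) \<Longrightarrow> \<exists>m'<m. mtj G u' M m'"
proof (induction G u M m rule: tj_mtj.inducts(2)[where ?P1.0="\<lambda>_ _ _ _. True"])
  case (mEmp G u)
  then show ?case by auto
next
  case (mAdd G1 u \<sigma> n G2 M m G)
  have "\<forall>G \<sigma> k. tj G u \<sigma> k \<longrightarrow> (\<exists>k'\<le>k. tj G u' \<sigma> k')" using mAdd.prems(2) less_imp_le by blast
  then obtain m' where "mtj G2 u' M m'" "m' \<le> m" using mtj_map_le0[OF \<open>mtj G2 u M m\<close>] by blast
  moreover obtain k' where "tj G1 u' \<sigma> k'" "k' < n" using mAdd.prems(2) \<open>tj G1 u \<sigma> n\<close> by blast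
  ultimately show ?case using tj_mtj.mAdd[of G1 u' \<sigma> k' G2 M m' G] \<open>cle (cadd G1 G2) G\<close>
    by (intro exI[of _ "k' + m'"]) auto
qed auto

lemma ctx_tj_le:
  assumes step: "\<And>s s' G \<tau> n. R s s' \<Longrightarrow> tj G s \<tau> n \<Longrightarrow> \<exists>n'\<le>n. tj G s' \<tau> n'"
  shows "ctx R s s' \<Longrightarrow> tj G s \<tau> n \<Longrightarrow> \<exists>n'\<le>n. tj G s' \<tau> n'"
proof (induction arbitrary: G \<tau> n rule: ctx.induct)
  case (root t t')
  then show ?case using step by blast
next
  case (lam t t')
  from lam.prems obtain M \<tau>' n0 where h: "\<tau> = Arr M \<tau>'" "n = Suc n0" "tj (case_nat M G) t \<tau>' n0"
    by (auto elim: tjLamE)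
  then obtain n1 where "n1 \<le> n0" "tj (case_nat M G) t' \<tau>' n1" using lam.IH by blast
  then show ?case using h tj_mtj.tLam by (intro exI[of _ "Suc n1"]) auto
next
  case (appl t t' u)
  from appl.prems obtain G1 M n1 G2 m where
    h: "tj G1 t (Arr M \<tau>) n1" "M \<noteq> {#}" "mtj G2 u M m" "cle (cadd G1 G2) G" "n = Suc (n1 + m)"
    by (auto elim: tjAppE)
  then obtain n1' where "n1' \<le> n1" "tj G1 t' (Arr M \<tau>) n1'" using appl.IH by blast
  then show ?case using h tj_mtj.tApp by (intro exI[of _ "Suc (n1' + m)"]) auto
next
  case (appr u u' t)
  from appr.prems obtain G1 M n1 G2 m where
    h: "tj G1 t (Arr M \<tau>) n1" "M \<noteq> {#}" "mtj G2 u M m" "cle (cadd G1 G2) G" "n = Suc (n1 + m)"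
    by (auto elim: tjAppE)
  then obtain m' where "m' \<le> m" "mtj G2 u' M m'" using mtj_map_le0[OF h(3)] appr.IH by blast
  then show ?case using h tj_mtj.tApp by (intro exI[of _ "Suc (n1 + m')"]) auto
next
  case (subl t t' u)
  from subl.prems obtain G1 M n1 G2 m where
    h: "tj (case_nat M G1) t \<tau> n1" "M \<noteq> {#}" "mtj G2 u M m" "cle (cadd G1 G2) G" "n = n1 + m"
    by (auto elim: tjSubE)
  then obtain n1' where "n1' \<le> n1" "tj (case_nat M G1) t' \<tau> n1'" using subl.IH by blast
  then show ?case using h tj_mtj.tSub by (intro exI[of _ "n1' + m"]) auto
next
  case (subr u u' t)
  from subr.prems obtain G1 M n1 G2 m where
    h: "tj (case_nat M G1) t \<tau> n1" "M \<noteq> {#}" "mtj G2 u M m" "cle (cadd G1 G2) G" "n = n1 + m"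
    by (auto elim: tjSubE)
  then obtain m' where "m' \<le> m" "mtj G2 u' M m'" using mtj_map_le0[OF h(3)] subr.IH by blast
  then show ?case using h tj_mtj.tSub by (intro exI[of _ "n1 + m'"]) auto
qed

lemma ctx_tj_lt:
  assumes step: "\<And>s s' G \<tau> n. R s s' \<Longrightarrow> tj G s \<tau> n \<Longrightarrow> \<exists>n'<n. tj G s' \<tau> n'"
  shows "ctx R s s' \<Longrightarrow> tj G s \<tau> n \<Longrightarrow> \<exists>n'<n. tj G s' \<tau> n'"
proof (induction arbitrary: G \<tau> n rule: ctx.induct)
  case (root t t')
  then show ?case using step by blast
next
  case (lam t t')
  from lam.prems obtain M \<tau>' n0 where h: "\<tau> = Arr M \<tau>'" "n = Suc n0" "tj (case_nat M G) t \<tau>' n0"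
    by (auto elim: tjLamE)
  then obtain n1 where "n1 < n0" "tj (case_nat M G) t' \<tau>' n1" using lam.IH by blast
  then show ?case using h tj_mtj.tLam by (intro exI[of _ "Suc n1"]) auto
next
  case (appl t t' u)
  from appl.prems obtain G1 M n1 G2 m where
    h: "tj G1 t (Arr M \<tau>) n1" "M \<noteq> {#}" "mtj G2 u M m" "cle (cadd G1 G2) G" "n = Suc (n1 + m)"
    by (auto elim: tjAppE)
  then obtain n1' where "n1' < n1" "tj G1 t' (Arr M \<tau>) n1'" using appl.IH by blast
  then show ?case using h tj_mtj.tApp by (intro exI[of _ "Suc (n1' + m)"]) auto
next
  case (appr u u' t)
  from appr.prems obtain G1 M n1 G2 m where
    h: "tj G1 t (Arr M \<tau>) n1" "M \<noteq> {#}" "mtj G2 u M m" "cle (cadd G1 G2) G" "n = Suc (n1 + m)"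
    by (auto elim: tjAppE)
  then obtain m' where "m' < m" "mtj G2 u' M m'" using mtj_map_lt0[OF h(3,2)] appr.IH by blast
  then show ?case using h tj_mtj.tApp by (intro exI[of _ "Suc (n1 + m')"]) auto
next
  case (subl t t' u)
  from subl.prems obtain G1 M n1 G2 m where
    h: "tj (case_nat M G1) t \<tau> n1" "M \<noteq> {#}" "mtj G2 u M m" "cle (cadd G1 G2) G" "n = n1 + m"
    by (auto elim: tjSubE)
  then obtain n1' where "n1' < n1" "tj (case_nat M G1) t' \<tau> n1'" using subl.IH by blast
  then show ?case using h tj_mtj.tSub by (intro exI[of _ "n1' + m"]) auto
next
  case (subr u u' t)
  from subr.prems obtain G1 M n1 G2 m where
    h: "tj (case_nat M G1) t \<tau> n1" "M \<noteq> {#}" "mtj G2 u M m" "cle (cadd G1 G2) G" "n = n1 + m"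
    by (auto elim: tjSubE)
  then obtain m' where "m' < m" "mtj G2 u' M m'" using mtj_map_lt0[OF h(3,2)] subr.IH by blast
  then show ?case using h tj_mtj.tSub by (intro exI[of _ "n1 + m'"]) auto
qed

lemma ctx_es_split: "ctx es_rule s s' \<Longrightarrow> ctx str_rule s s' \<or> ctx prop_rule s s'"
proof (induction rule: ctx.induct)
  case (root t t')
  then show ?case using es_rule_split ctx.root by blast
next
  case (lam t t') then show ?case using ctx.lam by blast
next
  case (appl t t' u) then show ?case using ctx.appl by blast
next
  case (appr u u' t) then show ?case using ctx.appr by blast
next
  case (subl t t' u) then show ?case using ctx.subl by blast
next
  case (subr u u' t) then show ?case using ctx.subr by blast
qed

lemma cs_eq_tj: "cs_eq s s' \<Longrightarrow> tj G s \<tau> n \<Longrightarrow> \<exists>n'\<le>n. tj G s' \<tau> n'"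
proof -
  assume "cs_eq s s'" "tj G s \<tau> n"
  then have "(ctx cs_rule)\<^sup>*\<^sup>* s s'" by (simp add: cs_eq_rtrancl)
  then show ?thesis using \<open>tj G s \<tau> n\<close>
  proof (induction arbitrary: n rule: rtranclp_induct)
    case base then show ?case by auto
  next
    case (step y z)
    then obtain n1 where "n1 \<le> n" "tj G y \<tau> n1" by blast
    have "\<exists>n2\<le>n1. tj G z \<tau> n2"
      by (rule ctx_tj_le[where R=cs_rule, OF _ step(2) \<open>tj G y \<tau> n1\<close>]) (rule SR_cs; assumption)
    then obtain n2 where "n2 \<le> n1" "tj G z \<tau> n2" by blast
    then show ?case using \<open>n1 \<le> n\<close> by (intro exI[of _ n2]) auto
  qed
qed

lemma cs_eq_meas: "cs_eq s s' \<Longrightarrow> DD s' = DD s"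
proof -
  assume "cs_eq s s'"
  then have "(ctx cs_rule)\<^sup>*\<^sup>* s s'" by (simp add: cs_eq_rtrancl)
  then show ?thesis by (induction rule: rtranclp_induct) (auto dest: ctx_cs_measure)
qed

lemma es_red_dec:
  assumes "es_red t t'" "tj G t \<tau> n"
  shows "\<exists>n'. tj G t' \<tau> n' \<and> ((n', DD t'), (n, DD t)) \<in> less_than <*lex*> less_than"
proof -
  obtain s s' where h: "cs_eq t s" "ctx es_rule s s'" "cs_eq s' t'" using assms(1) es_red_def by blast
  obtain n1 where n1: "n1 \<le> n" "tj G s \<tau> n1" using cs_eq_tj[OF h(1) assms(2)] by blast
  have ds: "DD s = DD t" using cs_eq_meas[OF h(1)] .
  have "\<exists>n2. tj G s' \<tau> n2 \<and> (n2 < n1 \<or> (n2 \<le> n1 \<and> DD s' < DD s))"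
  proof (cases "ctx str_rule s s'")
    case True
    have "\<exists>n2<n1. tj G s' \<tau> n2"
      by (rule ctx_tj_lt[where R=str_rule, OF _ True n1(2)]) (rule SR_str; assumption)
    then show ?thesis by blast
  next
    case False
    then have p: "ctx prop_rule s s'" using ctx_es_split[OF h(2)] by blast
    have "\<exists>n2\<le>n1. tj G s' \<tau> n2"
      by (rule ctx_tj_le[where R=prop_rule, OF _ p n1(2)]) (rule SR_prop; assumption)
    then show ?thesis using ctx_prop_measure[OF p] by blast
  qed
  then obtain n2 where n2: "tj G s' \<tau> n2" "n2 < n1 \<or> (n2 \<le> n1 \<and> DD s' < DD s)" by blast
  obtain n3 where n3: "n3 \<le> n2" "tj G t' \<tau> n3" using cs_eq_tj[OF h(3) n2(1)] by blast
  have "DD t' = DD s'" using cs_eq_meas[OF h(3)] .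
  then show ?thesis using n1 n2 n3 ds by (intro exI[of _ n3]) auto
qed

lemma typed_SN: "tj G t \<tau> n \<Longrightarrow> SN es_red t"
proof -
  have "\<forall>t G \<tau> n. p = (n, DD t) \<longrightarrow> tj G t \<tau> n \<longrightarrow> Wellfounded.accp (conversep es_red) t" for p
  proof (induction p rule: wf_induct[OF wf_lex_prod[OF wf_less_than wf_less_than]])
    case (1 p)
    show ?case
    proof (intro allI impI)
      fix t G \<tau> n assume a: "p = (n, DD t)" "tj G t \<tau> n"
      show "Wellfounded.accp (conversep es_red) t"
      proof (rule accp.intros)
        fix y assume "es_red\<inverse>\<inverse> y t"
        then have "es_red t y" by simp
        then obtain n' where "tj G y \<tau> n'" "((n', DD y), (n, DD t)) \<in> less_than <*lex*> less_than"
          using es_red_dec a(2) by blast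
        then show "Wellfounded.accp (conversep es_red) y" using 1 a(1) by blast
      qed
    qed
  qed
  then show "tj G t \<tau> n \<Longrightarrow> SN es_red t" unfolding SN_def by blast
qed

definition ins :: "nat \<Rightarrow> ty multiset \<Rightarrow> ctxt \<Rightarrow> ctxt" where
  "ins k M G = (\<lambda>i. if i < k then G i else if i = k then M else G (i - 1))"

lemma ins0: "ins 0 M G = case_nat M G"
  by (rule ext) (auto simp: ins_def split: nat.split)

lemma ins_Suc: "ins (Suc k) M G = case_nat (G 0) (ins k M (tl_ctx G))"
  by (rule ext) (auto simp: ins_def tl_ctx_def split: nat.split)

lemma ins_cadd: "cadd (ins k A G) (ins k B H) = ins k (A + B) (cadd G H)"
  by (rule ext) (auto simp: ins_def cadd_def)

lemma tVar1: "\<tau> \<in># G i \<Longrightarrow> tj G (Var i) \<tau> (Suc 0)"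
  using tj_mtj.tVar by simp

definition emp :: ctxt where "emp = (\<lambda>_. {#})"

lemma anti_m0:
  "mtj G x N n \<Longrightarrow>
   (\<forall>G \<sigma> n. tj G x \<sigma> n \<longrightarrow> (\<exists>M Gu Gs nu ms. tj (ins k M Gu) u \<sigma> nu \<and> mtj Gs s M ms \<and> cle (cadd Gu Gs) G)) \<Longrightarrow>
   \<exists>M Gu Gs nu ms. mtj (ins k M Gu) u N nu \<and> mtj Gs s M ms \<and> cle (cadd Gu Gs) G"
proof (induction G x N n rule: tj_mtj.inducts(2)[where ?P1.0="\<lambda>_ _ _ _. True"])
  case (mEmp G x)
  show ?case
    by (rule exI[of _ "{#}"], rule exI[of _ emp], rule exI[of _ emp])
       (auto intro: tj_mtj.mEmp simp: emp_def)
next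
  case (mAdd G1 x \<sigma> n G2 N m G)
  obtain M1 Gu1 Gs1 nu1 ms1 where a: "tj (ins k M1 Gu1) u \<sigma> nu1" "mtj Gs1 s M1 ms1" "cle (cadd Gu1 Gs1) G1"
    using mAdd.prems \<open>tj G1 x \<sigma> n\<close> by blast
  obtain M2 Gu2 Gs2 nu2 ms2 where b: "mtj (ins k M2 Gu2) u N nu2" "mtj Gs2 s M2 ms2" "cle (cadd Gu2 Gs2) G2"
    using mAdd.IH mAdd.prems by blast
  have "mtj (ins k (M1 + M2) (cadd Gu1 Gu2)) u (add_mset \<sigma> N) (nu1 + nu2)"
    using tj_mtj.mAdd[OF a(1) b(1)] ins_cadd by simp
  moreover have "mtj (cadd Gs1 Gs2) s (M1 + M2) (ms1 + ms2)" using mtj_join[OF a(2) b(2)] .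
  moreover have "cle (cadd (cadd Gu1 Gu2) (cadd Gs1 Gs2)) G"
    using cle_trans[OF cle_four[OF a(3) b(3)] \<open>cle (cadd G1 G2) G\<close>] .
  ultimately show ?case by blast
qed auto

lemma anti_subst:
  "is_lambda t \<Longrightarrow> tj G (subst t k s) \<tau> n \<Longrightarrow>
   \<exists>M Gt Gs nt ms. tj (ins k M Gt) t \<tau> nt \<and> mtj Gs s M ms \<and> cle (cadd Gt Gs) G"
proof (induction t arbitrary: G \<tau> n k s)
  case (Var i)
  show ?case
  proof (cases "k < i")
    case True
    then have "tj G (Var (i - 1)) \<tau> n" using Var.prems by simp
    then have "\<tau> \<in># G (i - 1)" by (auto elim: tjVarE)
    then have "tj (ins k {#} G) (Var i) \<tau> 1" using True by (auto simp: ins_def intro: tVar1)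
    moreover have "mtj emp s {#} 0" by (rule tj_mtj.mEmp)
    moreover have "cle (cadd G emp) G" by (simp add: emp_def)
    ultimately show ?thesis by blast
  next
    case False
    show ?thesis
    proof (cases "i = k")
      case True
      then have h: "tj G s \<tau> n" using Var.prems by simp
      have "tj (ins k {#\<tau>#} emp) (Var i) \<tau> 1" using True by (auto simp: ins_def intro: tVar1)
      moreover have "mtj G s {#\<tau>#} n" using mtj_single[OF h] .
      moreover have "cle (cadd emp G) G" by (simp add: emp_def)
      ultimately show ?thesis by blast
    next
      case False2: False
      then have "tj G (Var i) \<tau> n" using Var.prems False by simp
      then have "\<tau> \<in># G i" by (auto elim: tjVarE)
      then have "tj (ins k {#} G) (Var i) \<tau> 1" using False False2 by (auto simp: ins_def intro: tVar1)
      moreover have "mtj emp s {#} 0" by (rule tj_mtj.mEmp)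
      moreover have "cle (cadd G emp) G" by (simp add: emp_def)
      ultimately show ?thesis by blast
    qed
  qed
next
  case (Lam t)
  from Lam.prems(2) obtain K \<tau>' n' where h: "\<tau> = Arr K \<tau>'" "n = Suc n'"
    "tj (case_nat K G) (subst t (Suc k) (lift 0 s)) \<tau>' n'"
    by (auto elim: tjLamE)
  obtain M Gt Gs nt ms where a: "tj (ins (Suc k) M Gt) t \<tau>' nt" "mtj Gs (lift 0 s) M ms" "cle (cadd Gt Gs) (case_nat K G)"
    using Lam.IH[OF _ h(3)] Lam.prems(1) by auto
  note c = cle_cons[OF a(3)]
  have s': "mtj (tl_ctx Gs) s M ms" using mtj_lift0_back[of "Gs 0" "tl_ctx Gs"] a(2) cons_tl by metis
  have "tj (case_nat (Gt 0) (ins k M (tl_ctx Gt))) t \<tau>' nt" using a(1) ins_Suc by metis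
  then have "tj (case_nat K (ins k M (tl_ctx Gt))) t \<tau>' nt"
    using tj_weak cle_cons_mono[OF sub_left[OF conjunct1[OF c]] cle_refl] by blast
  then have "tj (ins k M (tl_ctx Gt)) (Lam t) \<tau> (Suc nt)" unfolding h(1) by (rule tj_mtj.tLam)
  then show ?case using s' conjunct2[OF c] by blast
next
  case (App t u)
  from App.prems(2) obtain G1 N n1 G2 m where h: "tj G1 (subst t k s) (Arr N \<tau>) n1" "N \<noteq> {#}"
    "mtj G2 (subst u k s) N m" "cle (cadd G1 G2) G"
    by (auto elim: tjAppE)
  obtain M1 Gt1 Gs1 nt1 ms1 where a: "tj (ins k M1 Gt1) t (Arr N \<tau>) nt1" "mtj Gs1 s M1 ms1" "cle (cadd Gt1 Gs1) G1"
    using App.IH(1)[OF _ h(1)] App.prems(1) by auto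
  obtain M2 Gu2 Gs2 nu2 ms2 where b: "mtj (ins k M2 Gu2) u N nu2" "mtj Gs2 s M2 ms2" "cle (cadd Gu2 Gs2) G2"
  proof -
    have lu: "is_lambda u" using App.prems(1) by simp
    have "\<forall>G \<sigma> n. tj G (subst u k s) \<sigma> n \<longrightarrow> (\<exists>M Gu Gs nu ms. tj (ins k M Gu) u \<sigma> nu \<and> mtj Gs s M ms \<and> cle (cadd Gu Gs) G)"
      using App.IH(2)[OF lu] by blast
    from anti_m0[OF h(3) this] show ?thesis using that by blast
  qed
  have "tj (ins k (M1 + M2) (cadd Gt1 Gu2)) (App t u) \<tau> (Suc (nt1 + nu2))"
    using tj_mtj.tApp[OF a(1) h(2) b(1)] ins_cadd by simp
  moreover have "mtj (cadd Gs1 Gs2) s (M1 + M2) (ms1 + ms2)" using mtj_join[OF a(2) b(2)] .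
  moreover have "cle (cadd (cadd Gt1 Gu2) (cadd Gs1 Gs2)) G"
    using cle_trans[OF cle_four[OF a(3) b(3)] h(4)] .
  ultimately show ?case by blast
next
  case (Sub t u)
  then show ?case by simp
qed

inductive hred :: "trm \<Rightarrow> trm \<Rightarrow> trm \<Rightarrow> bool" where
  hr_base: "is_lambda b \<Longrightarrow> hred (App (Lam b) a) (subst b 0 a) a"
| hr_app: "hred s r a \<Longrightarrow> hred (App s w) (App r w) a"

lemma hred_expand:
  "hred s r a \<Longrightarrow> tj G r \<tau> n \<Longrightarrow> tj Ga a \<sigma> na \<Longrightarrow> \<exists>G' n'. tj G' s \<tau> n'"
proof (induction arbitrary: G \<tau> n rule: hred.induct)
  case (hr_base b a)
  obtain M Gt Gs nt ms where h: "tj (ins 0 M Gt) b \<tau> nt" "mtj Gs a M ms" "cle (cadd Gt Gs) G"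
    using anti_subst[OF hr_base.hyps hr_base.prems(1)] by blast
  show ?case
  proof (cases "M = {#}")
    case True
    have "tj (case_nat {#\<sigma>#} Gt) b \<tau> nt"
      using tj_weak[of "case_nat M Gt" b \<tau> nt] h(1) True ins0 cle_cons_mono[of "{#}" "{#\<sigma>#}" Gt Gt] by auto
    then have l: "tj Gt (Lam b) (Arr {#\<sigma>#} \<tau>) (Suc nt)" by (rule tj_mtj.tLam)
    have ne: "{#\<sigma>#} \<noteq> {#}" by simp
    from tj_mtj.tApp[OF l ne mtj_single[OF hr_base.prems(2)] cle_refl] show ?thesis by blast
  next
    case False
    have "tj (case_nat M Gt) b \<tau> nt" using h(1) ins0 by metis
    then have "tj Gt (Lam b) (Arr M \<tau>) (Suc nt)" by (rule tj_mtj.tLam)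
    from tj_mtj.tApp[OF this False h(2) cle_refl] show ?thesis by blast
  qed
next
  case (hr_app s r a w)
  from hr_app.prems(1) obtain G1 N n1 G2 m where h: "tj G1 r (Arr N \<tau>) n1" "N \<noteq> {#}"
    "mtj G2 w N m" "cle (cadd G1 G2) G"
    by (auto elim: tjAppE)
  obtain G1' n1' where "tj G1' s (Arr N \<tau>) n1'" using hr_app.IH[OF h(1) hr_app.prems(2)] by blast
  from tj_mtj.tApp[OF this h(2,3) cle_refl] show ?case by blast
qed

inductive isub :: "trm \<Rightarrow> trm \<Rightarrow> bool" where
  "isub t (Lam t)" | "isub t (App t u)" | "isub u (App t u)" | "isub t (Sub t u)" | "isub u (Sub t u)"

abbreviation psub where "psub \<equiv> isub\<^sup>+\<^sup>+"

lemma isub_size: "isub a b \<Longrightarrow> size a < size b"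
  by (induction rule: isub.induct) auto

lemma psub_size: "psub a b \<Longrightarrow> size a < size b"
  by (induction rule: tranclp_induct) (auto dest: isub_size)

lemma isub_beta: "isub s x \<Longrightarrow> beta s s' \<Longrightarrow> \<exists>x'. beta x x' \<and> isub s' x'"
  unfolding beta_def
  by (induction rule: isub.induct) (blast intro: isub.intros ctx.intros)+

lemma psub_beta: "psub s x \<Longrightarrow> beta s s' \<Longrightarrow> \<exists>x'. beta x x' \<and> psub s' x'"
proof (induction arbitrary: s' rule: tranclp_induct)
  case (base y)
  then show ?case using isub_beta by blast
next
  case (step y z)
  then obtain y' where "beta y y'" "psub s' y'" by blast
  moreover obtain z' where "beta z z'" "isub y' z'" using isub_beta[OF step(2) \<open>beta y y'\<close>] by blast
  ultimately show ?case by (meson tranclp.trancl_into_trancl)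
qed

lemma SN_ind:
  assumes "SN beta t"
    and H: "\<And>s. (\<And>s'. beta s s' \<Longrightarrow> P s') \<Longrightarrow> (\<And>s'. psub s' s \<Longrightarrow> P s') \<Longrightarrow> P s"
  shows "P t"
proof -
  have "Wellfounded.accp (conversep beta) t" using assms(1) by (simp add: SN_def)
  then have "\<forall>s. (s = t \<or> psub s t) \<longrightarrow> P s"
  proof (induction rule: Wellfounded.accp_induct_rule)
    case (1 x)
    show ?case
    proof (intro allI)
      fix s
      show "(s = x \<or> psub s x) \<longrightarrow> P s"
      proof (induction s rule: measure_induct_rule[of size])
        case (less s)
        show ?case
        proof
          assume sx: "s = x \<or> psub s x"
          show "P s"
          proof (rule H)
            fix s' assume b: "beta s s'"
            show "P s'"
            proof (cases "s = x")
              case True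
              then show ?thesis using 1 b by auto
            next
              case False
              then have "psub s x" using sx by simp
              then obtain x' where "beta x x'" "psub s' x'" using psub_beta b by blast
              then show ?thesis using 1 by auto
            qed
          next
            fix s' assume p: "psub s' s"
            then have "psub s' x" using sx by auto
            then show "P s'" using less p psub_size by blast
          qed
        qed
      qed
    qed
  qed
  then show ?thesis by blast
qed

fun neutral :: "trm \<Rightarrow> bool" where
  "neutral (Var i) = True"
| "neutral (App t u) = neutral t"
| "neutral _ = False"

lemma is_lambda_lift[simp]: "is_lambda (lift k t) = is_lambda t"
  by (induction t arbitrary: k) auto

lemma is_lambda_subst: "is_lambda t \<Longrightarrow> is_lambda u \<Longrightarrow> is_lambda (subst t k u)"
  by (induction t arbitrary: k u) auto

lemma beta_lambda: "beta s s' \<Longrightarrow> is_lambda s \<Longrightarrow> is_lambda s'"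
  unfolding beta_def
proof (induction rule: ctx.induct)
  case (root t t')
  then show ?case by (auto elim!: beta_rule.cases intro: is_lambda_subst)
qed auto

lemma isub_lambda: "isub a b \<Longrightarrow> is_lambda b \<Longrightarrow> is_lambda a"
  by (induction rule: isub.induct) auto

lemma psub_lambda: "psub a b \<Longrightarrow> is_lambda b \<Longrightarrow> is_lambda a"
  by (induction rule: tranclp_induct) (auto dest: isub_lambda)

lemma hred_beta: "hred s r a \<Longrightarrow> beta s r"
  unfolding beta_def
  by (induction rule: hred.induct) (auto intro: ctx.root ctx.appl beta_rule.intros)

lemma hred_exists: "is_lambda (App s1 s2) \<Longrightarrow> \<not> neutral s1 \<Longrightarrow>
   \<exists>r a. hred (App s1 s2) r a \<and> psub a (App s1 s2)"
proof (induction s1 arbitrary: s2)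
  case (Var x)
  then show ?case by simp
next
  case (Lam b)
  have "hred (App (Lam b) s2) (subst b 0 s2) s2" using Lam.prems(1) by (auto intro: hred.intros)
  moreover have "psub s2 (App (Lam b) s2)" by (auto intro: isub.intros)
  ultimately show ?case by blast
next
  case (App t u)
  have "\<exists>r a. hred (App t u) r a \<and> psub a (App t u)" using App.IH(1)[of u] App.prems by simp
  then obtain r a where "hred (App t u) r a" "psub a (App t u)" by blast
  moreover have "psub (App t u) (App (App t u) s2)" by (auto intro: isub.intros)
  ultimately show ?case by (meson hred.intros(2) tranclp_trans)
next
  case (Sub t u)
  then show ?case by simp
qed

lemma typable_SN:
  assumes "SN beta t"
  shows "is_lambda t \<longrightarrow> (\<exists>G \<tau> n. tj G t \<tau> n) \<and> (neutral t \<longrightarrow> (\<forall>\<tau>. \<exists>G n. tj G t \<tau> n))"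
proof (rule SN_ind[OF assms])
  fix s
  assume IH1: "\<And>s'. beta s s' \<Longrightarrow> is_lambda s' \<longrightarrow> (\<exists>G \<tau> n. tj G s' \<tau> n) \<and> (neutral s' \<longrightarrow> (\<forall>\<tau>. \<exists>G n. tj G s' \<tau> n))"
  assume IH2: "\<And>s'. psub s' s \<Longrightarrow> is_lambda s' \<longrightarrow> (\<exists>G \<tau> n. tj G s' \<tau> n) \<and> (neutral s' \<longrightarrow> (\<forall>\<tau>. \<exists>G n. tj G s' \<tau> n))"
  show "is_lambda s \<longrightarrow> (\<exists>G \<tau> n. tj G s \<tau> n) \<and> (neutral s \<longrightarrow> (\<forall>\<tau>. \<exists>G n. tj G s \<tau> n))"
  proof
    assume ls: "is_lambda s"
    have Psub: "\<And>a. psub a s \<Longrightarrow> (\<exists>G \<tau> n. tj G a \<tau> n) \<and> (neutral a \<longrightarrow> (\<forall>\<tau>. \<exists>G n. tj G a \<tau> n))"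
      using IH2 psub_lambda ls by blast
    show "(\<exists>G \<tau> n. tj G s \<tau> n) \<and> (neutral s \<longrightarrow> (\<forall>\<tau>. \<exists>G n. tj G s \<tau> n))"
    proof (cases s)
      case (Var i)
      have "\<forall>\<tau>. \<exists>G n. tj G s \<tau> n"
      proof
        fix \<tau>
        have "tj (\<lambda>j. if j = i then {#\<tau>#} else {#}) (Var i) \<tau> (Suc 0)" by (rule tVar1) simp
        then show "\<exists>G n. tj G s \<tau> n" using Var by blast
      qed
      then show ?thesis by blast
    next
      case (Lam b)
      then obtain G \<tau> n where "tj G b \<tau> n" using Psub[of b] by (auto intro: isub.intros)
      then have "tj (case_nat (G 0) (tl_ctx G)) b \<tau> n" using cons_tl by simp
      then have "tj (tl_ctx G) (Lam b) (Arr (G 0) \<tau>) (Suc n)" by (rule tj_mtj.tLam)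
      then show ?thesis using Lam by auto
    next
      case (App s1 s2)
      show ?thesis
      proof (cases "neutral s1")
        case True
        have p1: "\<forall>\<tau>. \<exists>G n. tj G s1 \<tau> n" using Psub[of s1] True App by (auto intro: isub.intros)
        obtain G2 \<sigma> n2 where t2: "tj G2 s2 \<sigma> n2" using Psub[of s2] App by (auto intro: isub.intros)
        have all: "\<forall>\<tau>. \<exists>G n. tj G s \<tau> n"
        proof
          fix \<tau>
          obtain G1 n1 where "tj G1 s1 (Arr {#\<sigma>#} \<tau>) n1" using p1 by blast
          from tj_mtj.tApp[OF this _ mtj_single[OF t2] cle_refl] show "\<exists>G n. tj G s \<tau> n" using App by auto
        qed
        then show ?thesis by blast
      next
        case False
        obtain r a where h: "hred s r a" "psub a s" using hred_exists[OF ls[unfolded App] False] App by auto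
        have "beta s r" using hred_beta[OF h(1)] .
        then obtain G \<tau> n where "tj G r \<tau> n" using IH1 beta_lambda ls by blast
        moreover obtain Ga \<sigma> na where "tj Ga a \<sigma> na" using Psub[OF h(2)] by blast
        ultimately obtain G' n' where "tj G' s \<tau> n'" using hred_expand[OF h(1)] by blast
        moreover have "\<not> neutral s" using App False by simp
        ultimately show ?thesis by blast
      qed
    next
      case (Sub t u)
      then show ?thesis using ls by simp
    qed
  qed
qed

theorem corollary53:
  assumes "is_lambda t" and "SN beta t"
  shows "SN es_red t"
proof -
  obtain G \<tau> n where "tj G t \<tau> n" using typable_SN[OF assms(2)] assms(1) by blast
  then show ?thesis by (rule typed_SN)
qed

end
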